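(* Let $q\in(0,1]$. Consider the parametric convex semi-infinite problem described in the context, and let $((\bar c,\bar b),\bar x)\in\operatorname{gph}\mathcal{S}$. Suppose that the Extended Nürnberger Condition (ENC) is satisfied at $((\bar c,\bar b),\bar x)$. Then $$\operatorname{clm}_q\mathcal{S}((\bar c,\bar b),\bar x)=\operatorname{clm}_q\mathcal{S}_{\bar c}(\bar b,\bar x).$$
   Context: Setting: $T$ is a compact subset of a metric space $Z$ with $T\neq Z$; $f:\mathbb{R}^n\to\mathbb{R}$ and $g_t:\mathbb{R}^n\to\mathbb{R}$ ($t\in T$) are convex, with $(t,x)\mapsto g_t(x)$ continuous on $T\times\mathbb{R}^n$. $\mathcal{C}(T,\mathbb{R})$ is the space of continuous $b:T\to\mathbb{R}$, $t\mapsto b_t$, with $\|b\|_\infty=\max_t|b_t|$. For $(c,b)\in\mathbb{R}^n\times\mathcal{C}(T,\mathbb{R})$, $P(c,b)$: minimize $f(x)+\langle c,x\rangle$ subject to $g_t(x)\le b_t$, $t\in T$. Parameter norm $\|(c,b)\|=\max\{\|c\|,\|b\|_\infty\}$ (Euclidean on $\mathbb{R}^n$). $\mathcal{S}(c,b)$ is the optimal solution set of $P(c,b)$, $\mathcal{S}_c(b):=\mathcal{S}(c,b)$. Active set $T_b(x)=\{t\in T: g_t(x)=b_t\}$. Slater condition for $P(c,b)$: some $\hat x$ has $g_t(\hat x)<b_t$ for all $t$. ENC holds at $((\bar c,\bar b),\bar x)$ if $P(\bar c,\bar b)$ satisfies the Slater condition and there is no $D\subset T_{\bar b}(\bar x)$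 with $|D|<n$ such that $-(\partial f(\bar x)+\bar c)\cap\operatorname{cone}\big(\bigcup_{t\in D}\partial g_t(\bar x)\big)\neq\emptyset$, where $\partial$ is the convex subdifferential and cone is the convex conical hull, always containing $0_n$ ($\operatorname{cone}(\emptyset)=\{0_n\}$). For a set-valued $S:Y\rightrightarrows X$ between metric spaces and $(\bar y,\bar x)\in\operatorname{gph}S$, $\operatorname{clm}_q S(\bar y,\bar x):=\liminf_{y\to\bar y,\ x\to\bar x,\ x\in S(y)} d(y,\bar y)^q/d(x,S(\bar y))$. *)

theory Defs
  imports "HOL-Analysis.Analysis"
begin

definition subdiff :: "('a::real_inner \<Rightarrow> real) \<Rightarrow> 'a \<Rightarrow> 'a set" where
  "subdiff h x = {u. \<forall>y. h y \<ge> h x + inner u (y - x)}"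

(* convex conical hull: all finite nonnegative combinations; always contains 0 *)
definition conv_cone :: "'a::real_vector set \<Rightarrow> 'a set" where
  "conv_cone A = {v. \<exists>F w. finite F \<and> F \<subseteq> A \<and> (\<forall>u\<in>F. w u \<ge> 0) \<and> v = (\<Sum>u\<in>F. w u *\<^sub>R u)}"

(* sup norm on C(T,R); equals max_{t in T} |b t| for nonempty compact T *)
definition supnorm :: "'z set \<Rightarrow> ('z \<Rightarrow> real) \<Rightarrow> real" where
  "supnorm T b = Sup (insert 0 ((\<lambda>t. \<bar>b t\<bar>) ` T))"

definition CT :: "'z::topological_space set \<Rightarrow> ('z \<Rightarrow> real) set" where
  "CT T = {b. continuous_on T b}"

definition pdist :: "'z set \<Rightarrow> ('v::real_normed_vector \<times> ('z \<Rightarrow> real)) \<Rightarrow> ('v \<times> ('z \<Rightarrow> real)) \<Rightarrow> real" where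
  "pdist T p p' = max (norm (fst p - fst p')) (supnorm T (\<lambda>t. snd p t - snd p' t))"

definition feas :: "'z set \<Rightarrow> ('z \<Rightarrow> 'v \<Rightarrow> real) \<Rightarrow> ('z \<Rightarrow> real) \<Rightarrow> 'v set" where
  "feas T g b = {x. \<forall>t\<in>T. g t x \<le> b t}"

definition optset :: "'z set \<Rightarrow> ('v::real_inner \<Rightarrow> real) \<Rightarrow> ('z \<Rightarrow> 'v \<Rightarrow> real) \<Rightarrow> 'v \<Rightarrow> ('z \<Rightarrow> real) \<Rightarrow> 'v set" where
  "optset T f g c b = {x \<in> feas T g b. \<forall>y\<in>feas T g b. f x + inner c x \<le> f y + inner c y}"

definition active :: "'z set \<Rightarrow> ('z \<Rightarrow> 'v \<Rightarrow> real) \<Rightarrow> ('z \<Rightarrow> real) \<Rightarrow> 'v \<Rightarrow> 'z set" where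
  "active T g b x = {t\<in>T. g t x = b t}"

definition slater :: "'z set \<Rightarrow> ('z \<Rightarrow> 'v \<Rightarrow> real) \<Rightarrow> ('z \<Rightarrow> real) \<Rightarrow> bool" where
  "slater T g b \<longleftrightarrow> (\<exists>xh. \<forall>t\<in>T. g t xh < b t)"

definition ENC :: "'z set \<Rightarrow> (real^'n \<Rightarrow> real) \<Rightarrow> ('z \<Rightarrow> real^'n \<Rightarrow> real) \<Rightarrow> real^'n \<Rightarrow> ('z \<Rightarrow> real) \<Rightarrow> real^'n \<Rightarrow> bool" where
  "ENC T f g c b x \<longleftrightarrow> slater T g b \<and>
     \<not> (\<exists>D. D \<subseteq> active T g b x \<and> finite D \<and> card D < CARD('n) \<and>
            ((\<lambda>u. - (u + c)) ` subdiff f x) \<inter> conv_cone (\<Union>t\<in>D. subdiff (g t) x) \<noteq> {})"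

(* quotient d(y,ybar)^q / d(x,S(ybar)), with convention a/0 = +inf *)
definition clm_quot :: "real \<Rightarrow> real \<Rightarrow> real \<Rightarrow> ereal" where
  "clm_quot q dy dx = (if dx = 0 then \<infinity> else ereal (dy powr q / dx))"

(* clm_q S(ybar,xbar) = liminf_{y->ybar, x->xbar, x in S y} d(y,ybar)^q / d(x,S(ybar)),
   for S : Y \<rightrightarrows> X, distance dY on Y *)
definition clm :: "real \<Rightarrow> 'y set \<Rightarrow> ('y \<Rightarrow> 'y \<Rightarrow> real) \<Rightarrow> ('y \<Rightarrow> 'x::metric_space set) \<Rightarrow> 'y \<Rightarrow> 'x \<Rightarrow> ereal" where
  "clm q Y dY S yb xb =
     (SUP \<delta>\<in>{0<..}. INF yx\<in>{(y,x). y \<in> Y \<and> x \<in> S y \<and> dY y yb < \<delta> \<and> dist x xb < \<delta>}.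
        clm_quot q (dY (fst yx) yb) (infdist (snd yx) (S yb)))"

end

theory Submission
  imports Defs "HOL-Analysis.Analysis"
begin


lemma subdiff_closed: "closed (subdiff h x)"
proof -
  have "subdiff h x = (\<Inter>y. {u. h x + inner u (y - x) \<le> h y})"
    by (auto simp: subdiff_def)
  moreover have "closed {u. h x + inner u (y - x) \<le> h y}" for y
    by (intro closed_Collect_le continuous_intros)
  ultimately show ?thesis by auto
qed

lemma subgrad_norm_bound:
  fixes h :: "'a::real_inner \<Rightarrow> real"
  assumes v: "v \<in> subdiff h x" and M: "\<forall>y\<in>cball x 1. \<bar>h y\<bar> \<le> M"
  shows "norm v \<le> 2 * M"
proof (cases "v = 0")
  case True
  have "\<bar>h x\<bar> \<le> M" using M by auto
  then show ?thesis using True by auto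
next
  case False
  let ?y = "x + (1 / norm v) *\<^sub>R v"
  have "h ?y \<ge> h x + inner v (?y - x)" using v unfolding subdiff_def by blast
  also have "inner v (?y - x) = norm v"
    using False by (simp add: inner_commute power2_norm_eq_inner[symmetric] power2_eq_square)
  finally have 1: "h ?y \<ge> h x + norm v" .
  have "?y \<in> cball x 1" using False by (simp add: dist_norm)
  then have "\<bar>h ?y\<bar> \<le> M" using M by auto
  moreover have "\<bar>h x\<bar> \<le> M" using M by auto
  ultimately show ?thesis using 1 by linarith
qed

lemma descent_subgrad:
  fixes h :: "'a::euclidean_space \<Rightarrow> real"
  assumes cv: "convex_on UNIV h" and nd: "\<forall>\<sigma>>0. h x \<le> h (x + \<sigma> *\<^sub>R d)"
  shows "\<exists>v\<in>subdiff h x. inner v d \<ge> 0"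
proof -
  define E where "E = epigraph UNIV h"
  define L where "L = {(x + \<sigma> *\<^sub>R d, r) | \<sigma> r. \<sigma> \<ge> 0 \<and> r < h x}"
  have cE: "convex E" unfolding E_def using cv by (rule convex_epigraphI)
  have cL: "convex L"
    unfolding L_def
  proof (rule convexI)
    fix p q :: "'a \<times> real" and u v :: real
    assume "p \<in> {(x + \<sigma> *\<^sub>R d, r) | \<sigma> r. \<sigma> \<ge> 0 \<and> r < h x}" "q \<in> {(x + \<sigma> *\<^sub>R d, r) | \<sigma> r. \<sigma> \<ge> 0 \<and> r < h x}"
      and uv: "0 \<le> u" "0 \<le> v" "u + v = 1"
    then obtain s1 r1 s2 r2 where p: "p = (x + s1 *\<^sub>R d, r1)" "s1 \<ge> 0" "r1 < h x"
      and q: "q = (x + s2 *\<^sub>R d, r2)" "s2 \<ge> 0" "r2 < h x" by auto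
    have ux: "u *\<^sub>R x + v *\<^sub>R x = x" by (metis scaleR_add_left uv(3) scaleR_one)
    have "u *\<^sub>R p + v *\<^sub>R q = (x + (u * s1 + v * s2) *\<^sub>R d, u * r1 + v * r2)"
      using p q uv ux by (simp add: algebra_simps)
    moreover have "u * r1 + v * r2 < h x"
    proof (cases "u = 0")
      case True then show ?thesis using uv q by auto
    next
      case False
      then have "u * r1 < u * h x" using uv p by auto
      moreover have "v * r2 \<le> v * h x" using uv q by (auto intro: mult_left_mono)
      ultimately have "u * r1 + v * r2 < (u+v) * h x" by (simp add: algebra_simps)
      then show ?thesis using uv by simp
    qed
    moreover have "u * s1 + v * s2 \<ge> 0" using uv p q by auto
    ultimately show "u *\<^sub>R p + v *\<^sub>R q \<in> {(x + \<sigma> *\<^sub>R d, r) | \<sigma> r. \<sigma> \<ge> 0 \<and> r < h x}" by blast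
  qed
  have "(x + 0 *\<^sub>R d, h x - 1) \<in> L" unfolding L_def by fastforce
  then have neL: "L \<noteq> {}" by auto
  have "(x, h x) \<in> E" unfolding E_def epigraph_def by auto
  then have neE: "E \<noteq> {}" by auto
  have dis: "L \<inter> E = {}"
  proof -
    { fix s r assume "s \<ge> 0" "r < h x" "h (x + s *\<^sub>R d) \<le> r"
      moreover have "h x \<le> h (x + s *\<^sub>R d)" using nd \<open>s \<ge> 0\<close> by (cases "s = 0") auto
      ultimately have False by linarith }
    then show ?thesis unfolding L_def E_def epigraph_def by auto
  qed
  obtain a b where a0: "a \<noteq> 0" and aL: "\<forall>z\<in>L. inner a z \<le> b" and aE: "\<forall>z\<in>E. inner a z \<ge> b"
    using separating_hyperplane_sets[OF cL cE neL neE dis] by blast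
  obtain a1 a2 where a: "a = (a1, a2)" by fastforce
  have E': "a1 \<bullet> y + a2 * r \<ge> b" if "h y \<le> r" for y r
    using aE that unfolding E_def epigraph_def a by auto
  have L': "a1 \<bullet> (x + s *\<^sub>R d) + a2 * r \<le> b" if "s \<ge> 0" "r < h x" for s r
    using aL that unfolding L_def a by auto
  have a2ge: "a2 \<ge> 0"
  proof -
    have "a1 \<bullet> x + a2 * h x \<ge> b" using E'[of x "h x"] by simp
    moreover have "a1 \<bullet> x + a2 * (h x - 1) \<le> b" using L'[of 0 "h x - 1"] by simp
    ultimately show ?thesis by (simp add: algebra_simps)
  qed
  have a2pos: "a2 > 0"
  proof (rule ccontr)
    assume "\<not> a2 > 0"
    then have a20: "a2 = 0" using a2ge by auto
    then have a1nz: "a1 \<noteq> 0" using a0 a by (auto simp: zero_prod_def)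
    have "a1 \<bullet> (x - a1) \<ge> b" using E'[of "x - a1" "h (x - a1)"] a20 by simp
    moreover have "a1 \<bullet> x \<le> b" using L'[of 0 "h x - 1"] a20 by simp
    ultimately have "a1 \<bullet> a1 \<le> 0" by (simp add: inner_diff_right)
    then show False using a1nz by (metis inner_gt_zero_iff not_le)
  qed
  have Lc: "a1 \<bullet> (x + s *\<^sub>R d) + a2 * h x \<le> b" if "s \<ge> 0" for s
  proof (rule field_le_epsilon)
    fix e :: real assume "e > 0"
    have "a1 \<bullet> (x + s *\<^sub>R d) + a2 * (h x - e / a2) \<le> b"
      using L'[OF that, of "h x - e / a2"] a2pos \<open>e > 0\<close> by auto
    then show "a1 \<bullet> (x + s *\<^sub>R d) + a2 * h x \<le> b + e" using a2pos by (simp add: algebra_simps)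
  qed
  define v where "v = (- 1 / a2) *\<^sub>R a1"
  have "v \<in> subdiff h x"
    unfolding subdiff_def
  proof (intro CollectI allI)
    fix y
    have "a1 \<bullet> y + a2 * h y \<ge> a1 \<bullet> x + a2 * h x" using E'[of y "h y"] Lc[of 0] by simp
    then have "a2 * h y \<ge> a2 * h x - a1 \<bullet> (y - x)" by (simp add: inner_diff_right)
    then have "h y \<ge> h x - (a1 \<bullet> (y - x)) / a2" using a2pos by (simp add: field_simps)
    then show "h x + inner v (y - x) \<le> h y" unfolding v_def by simp
  qed
  moreover have "inner v d \<ge> 0"
  proof -
    have "a1 \<bullet> d \<le> 0" using Lc[of 1] Lc[of 0] E'[of x "h x"] by (simp add: inner_add_right)
    then show ?thesis unfolding v_def using a2pos by (simp add: divide_nonpos_pos)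
  qed
  ultimately show ?thesis by blast
qed



lemma convex_subdiff: "convex (subdiff h x)"
proof -
  have "subdiff h x = (\<Inter>y\<in>UNIV. {u. inner u (y - x) \<le> h y - h x})"
    by (auto simp: subdiff_def algebra_simps)
  moreover have "convex {u. inner u (y - x) \<le> h y - h x}" for y
  proof -
    have "{u. inner u (y - x) \<le> h y - h x} = {u. inner (y - x) u \<le> h y - h x}" by (simp add: inner_commute)
    then show ?thesis using convex_halfspace_le by metis
  qed
  ultimately show ?thesis by (auto intro: convex_INT)
qed

lemma subdiff_shift: "v \<in> subdiff (\<lambda>y. f y + inner c y) x \<longleftrightarrow> v - c \<in> subdiff f x"
proof -
  have eq: "inner (v - c) (y - x) = inner v (y - x) - inner c y + inner c x" for y
    by (simp add: inner_diff_left inner_diff_right)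
  show ?thesis unfolding subdiff_def mem_Collect_eq
  proof (intro iffI allI)
    fix y assume "\<forall>y. f x + inner c x + inner v (y - x) \<le> f y + inner c y"
    then have "f x + inner c x + inner v (y - x) \<le> f y + inner c y" by blast
    then show "f x + inner (v - c) (y - x) \<le> f y" using eq[of y] by linarith
  next
    fix y assume "\<forall>y. f x + inner (v - c) (y - x) \<le> f y"
    then have "f x + inner (v - c) (y - x) \<le> f y" by blast
    then show "f x + inner c x + inner v (y - x) \<le> f y + inner c y" using eq[of y] by linarith
  qed
qed

lemma convex_on_inner: "convex_on UNIV (\<lambda>y::'a::real_inner. inner c y)"
  unfolding convex_on_def by (auto simp: inner_add_right)

lemma descent:
  fixes h :: "'a::euclidean_space \<Rightarrow> real"
  assumes "convex_on UNIV h" "\<forall>v\<in>subdiff h x. inner v d < 0"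
  shows "\<exists>\<sigma>>0. h (x + \<sigma> *\<^sub>R d) < h x"
  using descent_subgrad[OF assms(1), of x d] assms(2) by force

lemma convex_seg:
  fixes h :: "'a::real_vector \<Rightarrow> real"
  assumes "convex_on UNIV h" "0 \<le> s" "s \<le> \<sigma>" "0 < \<sigma>"
  shows "h (x + s *\<^sub>R d) \<le> (1 - s/\<sigma>) * h x + (s/\<sigma>) * h (x + \<sigma> *\<^sub>R d)"
proof -
  have "x + s *\<^sub>R d = (1 - s/\<sigma>) *\<^sub>R x + (s/\<sigma>) *\<^sub>R (x + \<sigma> *\<^sub>R d)"
  proof -
    have 1: "(s/\<sigma>) *\<^sub>R (x + \<sigma> *\<^sub>R d) = (s/\<sigma>) *\<^sub>R x + s *\<^sub>R d"
      using assms by (simp add: scaleR_add_right)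
    have 2: "(1 - s/\<sigma>) *\<^sub>R x + (s/\<sigma>) *\<^sub>R x = x"
      by (metis scaleR_add_left diff_add_cancel scaleR_one)
    show ?thesis by (simp only: 1 add.assoc[symmetric] 2)
  qed
  moreover have "s/\<sigma> \<ge> 0" "s/\<sigma> \<le> 1" using assms by auto
  then have "h ((1 - s/\<sigma>) *\<^sub>R x + (s/\<sigma>) *\<^sub>R (x + \<sigma> *\<^sub>R d)) \<le> (1 - s/\<sigma>) * h x + (s/\<sigma>) * h (x + \<sigma> *\<^sub>R d)"
    using convex_onD[OF assms(1)] by blast
  ultimately show ?thesis by simp
qed

lemma cont_bound:
  fixes g :: "'z::metric_space \<Rightarrow> 'a::euclidean_space \<Rightarrow> real"
  assumes "compact T" "continuous_on (T \<times> UNIV) (\<lambda>(t, x). g t x)"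
  shows "\<exists>M. \<forall>t\<in>T. \<forall>y\<in>cball x0 r. \<bar>g t y\<bar> \<le> M"
proof -
  have "compact (T \<times> cball x0 r)" using assms(1) by (simp add: compact_Times)
  moreover have "continuous_on (T \<times> cball x0 r) (\<lambda>(t, x). g t x)"
    using assms(2) by (rule continuous_on_subset) auto
  ultimately have "compact ((\<lambda>(t, x). g t x) ` (T \<times> cball x0 r))"
    using compact_continuous_image by blast
  then obtain M where M: "\<forall>z\<in>(\<lambda>(t, x). g t x) ` (T \<times> cball x0 r). norm z \<le> M"
    using compact_imp_bounded[of "(\<lambda>(t, x). g t x) ` (T \<times> cball x0 r)"] unfolding bounded_iff by blast
  have "\<forall>t\<in>T. \<forall>y\<in>cball x0 r. \<bar>g t y\<bar> \<le> M"
  proof (intro ballI)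
    fix t y assume "t \<in> T" "y \<in> cball x0 r"
    then have "(\<lambda>(t, x). g t x) (t, y) \<in> (\<lambda>(t, x). g t x) ` (T \<times> cball x0 r)" by (intro imageI) auto
    then show "\<bar>g t y\<bar> \<le> M" using M by fastforce
  qed
  then show ?thesis by blast
qed

lemma g_tendsto:
  fixes g :: "'z::metric_space \<Rightarrow> 'a::euclidean_space \<Rightarrow> real"
  assumes cont: "continuous_on (T \<times> UNIV) (\<lambda>(t, x). g t x)"
    and tk: "tk \<longlonglongrightarrow> t" "t \<in> T" "eventually (\<lambda>k. tk k \<in> T) sequentially"
    and xk: "xk \<longlonglongrightarrow> x"
  shows "(\<lambda>k. g (tk k) (xk k)) \<longlonglongrightarrow> g t x"
proof -
  have "((\<lambda>k. (tk k, xk k)) \<longlongrightarrow> (t, x)) sequentially" using tk xk by (intro tendsto_Pair)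
  moreover have "(t, x) \<in> T \<times> UNIV" using tk(2) by simp
  moreover have "eventually (\<lambda>k. (tk k, xk k) \<in> T \<times> UNIV) sequentially"
    using tk(3) by (rule eventually_mono) simp
  ultimately have "(\<lambda>k. (\<lambda>(t, x). g t x) (tk k, xk k)) \<longlonglongrightarrow> (\<lambda>(t, x). g t x) (t, x)"
    by (rule continuous_on_tendsto_compose[OF cont])
  then show ?thesis by simp
qed

lemma subdiff_limit:
  fixes g :: "'z::metric_space \<Rightarrow> 'a::euclidean_space \<Rightarrow> real"
  assumes cont: "continuous_on (T \<times> UNIV) (\<lambda>(t, x). g t x)"
    and tk: "tk \<longlonglongrightarrow> t" "t \<in> T"
    and xk: "xk \<longlonglongrightarrow> x" and vk: "vk \<longlonglongrightarrow> v"
    and ev: "eventually (\<lambda>k. tk k \<in> T \<and> vk k \<in> subdiff (g (tk k)) (xk k)) sequentially"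
  shows "v \<in> subdiff (g t) x"
  unfolding subdiff_def
proof (intro CollectI allI)
  fix y
  have evT: "eventually (\<lambda>k. tk k \<in> T) sequentially" using ev by (rule eventually_mono) blast
  have 1: "(\<lambda>k. g (tk k) y) \<longlonglongrightarrow> g t y" using g_tendsto[OF cont tk evT tendsto_const] .
  have 2: "(\<lambda>k. g (tk k) (xk k) + inner (vk k) (y - xk k)) \<longlonglongrightarrow> g t x + inner v (y - x)"
    by (intro tendsto_intros g_tendsto[OF cont tk evT xk] vk xk)
  have 3: "eventually (\<lambda>k. g (tk k) (xk k) + inner (vk k) (y - xk k) \<le> g (tk k) y) sequentially"
    using ev by (rule eventually_mono) (simp add: subdiff_def)
  show "g t x + inner v (y - x) \<le> g t y" using tendsto_le[OF _ 1 2 3] by simp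
qed

lemma f_cont_form:
  fixes f :: "'a::euclidean_space \<Rightarrow> real"
  assumes "convex_on UNIV f"
  shows "continuous_on ({0::real} \<times> UNIV) (\<lambda>(t, x). (\<lambda>_. f) t x)"
proof -
  have "continuous_on UNIV f" using convex_on_continuous[OF open_UNIV assms] .
  moreover have "continuous_on ({0::real} \<times> UNIV) (snd :: real \<times> 'a \<Rightarrow> 'a)" by (intro continuous_intros)
  ultimately have "continuous_on ({0::real} \<times> UNIV) (f \<circ> snd)"
    using continuous_on_compose continuous_on_subset by blast
  then show ?thesis by (simp add: o_def case_prod_beta)
qed



lemma g_cont_t:
  fixes g :: "'z::metric_space \<Rightarrow> 'a::euclidean_space \<Rightarrow> real"
  assumes cont: "continuous_on (T \<times> UNIV) (\<lambda>(t, x). g t x)"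
  shows "continuous_on T (\<lambda>t. g t y)"
proof -
  have "continuous_on T (\<lambda>t. (\<lambda>(t, x). g t x) ((\<lambda>t. (t, y)) t))"
    by (rule continuous_on_compose2[OF cont]) (auto intro!: continuous_intros)
  then show ?thesis by simp
qed

lemma compact_subdiff:
  fixes h :: "'a::euclidean_space \<Rightarrow> real"
  assumes "\<forall>y\<in>cball x 1. \<bar>h y\<bar> \<le> M"
  shows "compact (subdiff h x)"
proof -
  have "bounded (subdiff h x)"
    unfolding bounded_iff using subgrad_norm_bound[OF _ assms] by blast
  then show ?thesis using subdiff_closed compact_eq_bounded_closed by blast
qed

lemma compact_active_subdiff:
  fixes g :: "'z::metric_space \<Rightarrow> 'a::euclidean_space \<Rightarrow> real"
  assumes T: "compact T" and cont: "continuous_on (T \<times> UNIV) (\<lambda>(t, x). g t x)"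
    and bc: "continuous_on T b"
  shows "compact {v. \<exists>t\<in>T. g t x = b t \<and> v \<in> subdiff (g t) x}" (is "compact ?A")
proof -
  obtain M where M: "\<forall>t\<in>T. \<forall>y\<in>cball x 1. \<bar>g t y\<bar> \<le> M" using cont_bound[OF T cont] by blast
  have "bounded ?A"
    unfolding bounded_iff using subgrad_norm_bound M by blast
  moreover have "closed ?A"
    unfolding closed_sequential_limits
  proof (intro allI impI, elim conjE)
    fix vs l assume vs: "\<forall>n. vs n \<in> ?A" and lim: "vs \<longlonglongrightarrow> l"
    have "\<forall>n. \<exists>t. t \<in> T \<and> g t x = b t \<and> vs n \<in> subdiff (g t) x" using vs by blast
    from choice[OF this] obtain ts where ts: "\<forall>n. ts n \<in> T \<and> g (ts n) x = b (ts n) \<and> vs n \<in> subdiff (g (ts n)) x"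
      by blast
    obtain lt r where lt: "lt \<in> T" "strict_mono r" "(ts \<circ> r) \<longlonglongrightarrow> lt"
      using seq_compactE[OF compact_imp_seq_compact[OF T], of ts] ts by blast
    have evT: "eventually (\<lambda>k. (ts \<circ> r) k \<in> T) sequentially" using ts by simp
    have 1: "(\<lambda>k. g ((ts \<circ> r) k) x) \<longlonglongrightarrow> g lt x"
      by (rule g_tendsto[OF cont lt(3) lt(1) evT tendsto_const])
    have 2: "(\<lambda>k. b ((ts \<circ> r) k)) \<longlonglongrightarrow> b lt"
      by (rule continuous_on_tendsto_compose[OF bc lt(3) lt(1) evT])
    have "(\<lambda>k. g ((ts \<circ> r) k) x) = (\<lambda>k. b ((ts \<circ> r) k))" using ts by (simp add: o_def)
    then have "g lt x = b lt" using LIMSEQ_unique[OF 1] 2 by metis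
    moreover have "l \<in> subdiff (g lt) x"
    proof (rule subdiff_limit[OF cont lt(3) lt(1) tendsto_const])
      show "(vs \<circ> r) \<longlonglongrightarrow> l" using LIMSEQ_subseq_LIMSEQ[OF lim lt(2)] .
      show "\<forall>\<^sub>F k in sequentially. (ts \<circ> r) k \<in> T \<and> (vs \<circ> r) k \<in> subdiff (g ((ts \<circ> r) k)) x"
        using ts by simp
    qed
    ultimately show "l \<in> ?A" using lt(1) by blast
  qed
  ultimately show ?thesis using compact_eq_bounded_closed by blast
qed

lemma KKT:
  fixes T :: "'z::metric_space set" and f :: "'a::euclidean_space \<Rightarrow> real" and g :: "'z \<Rightarrow> 'a \<Rightarrow> real"
  assumes T: "compact T" and cvf: "convex_on UNIV f" and cvg: "\<forall>t\<in>T. convex_on UNIV (g t)"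
    and cont: "continuous_on (T \<times> UNIV) (\<lambda>(t, x). g t x)" and bc: "continuous_on T b"
    and opt: "x \<in> optset T f g c b" and sl: "slater T g b"
  shows "\<exists>u\<in>subdiff f x. \<exists>F w. finite F \<and> F \<subseteq> {v. \<exists>t\<in>T. g t x = b t \<and> v \<in> subdiff (g t) x}
           \<and> (\<forall>v\<in>F. 0 \<le> w v) \<and> -(u + c) = (\<Sum>v\<in>F. w v *\<^sub>R v)"
proof -
  define A where "A = {v. \<exists>t\<in>T. g t x = b t \<and> v \<in> subdiff (g t) x}"
  define P where "P = (+) c ` subdiff f x"
  have xfeas: "\<forall>t\<in>T. g t x \<le> b t" using opt by (simp add: optset_def feas_def)
  have xopt: "\<And>y. (\<forall>t\<in>T. g t y \<le> b t) \<Longrightarrow> f x + inner c x \<le> f y + inner c y"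
    using opt by (simp add: optset_def feas_def)
  obtain Mf where Mf: "\<forall>t\<in>{0::real}. \<forall>y\<in>cball x 1. \<bar>f y\<bar> \<le> Mf"
    using cont_bound[OF compact_sing f_cont_form[OF cvf]] by blast
  have cSf: "compact (subdiff f x)" using compact_subdiff Mf by blast
  have cP: "compact P" unfolding P_def
    by (rule compact_continuous_image[OF _ cSf]) (intro continuous_intros)
  have cA: "compact A" unfolding A_def by (rule compact_active_subdiff[OF T cont bc])
  define C where "C = convex hull (P \<union> A)"
  have cC: "compact C" unfolding C_def by (intro compact_convex_hull compact_Un cP cA)
  have "0 \<in> C"
  proof (rule ccontr)
    assume "0 \<notin> C"
    note nC = this
    have cvC: "convex C" unfolding C_def by (rule convex_convex_hull)
    obtain a \<beta> where a: "a \<noteq> 0" "0 < \<beta>" "\<forall>z\<in>C. inner a z > \<beta>"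
      using separating_hyperplane_closed_0[OF cvC compact_imp_closed[OF cC] nC] by (elim exE conjE) simp
    define d where "d = - a"
    have neg: "inner z d < 0" if "z \<in> P \<union> A" for z
    proof -
      have "z \<in> C" unfolding C_def using that by (rule hull_inc)
      then have "inner a z > \<beta>" using a(3) by simp
      then have "inner a z > 0" using a(2) by linarith
      then show ?thesis unfolding d_def by (simp add: inner_commute)
    qed
    define \<phi> where "\<phi> = (\<lambda>y. f y + inner c y)"
    have cv\<phi>: "convex_on UNIV \<phi>" unfolding \<phi>_def using cvf convex_on_inner by (rule convex_on_add)
    have "\<forall>v\<in>subdiff \<phi> x. inner v d < 0"
    proof
      fix v assume "v \<in> subdiff \<phi> x"
      then have "v - c \<in> subdiff f x" unfolding \<phi>_def using subdiff_shift by blast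
      then have "c + (v - c) \<in> P" unfolding P_def by blast
      then show "inner v d < 0" using neg by simp
    qed
    then obtain \<sigma>0 where \<sigma>0: "\<sigma>0 > 0" "\<phi> (x + \<sigma>0 *\<^sub>R d) < \<phi> x" using descent[OF cv\<phi>] by blast
    have "\<forall>t\<in>T. \<exists>\<sigma>. \<sigma> > 0 \<and> g t (x + \<sigma> *\<^sub>R d) < b t"
    proof
      fix t assume t: "t \<in> T"
      show "\<exists>\<sigma>. \<sigma> > 0 \<and> g t (x + \<sigma> *\<^sub>R d) < b t"
      proof (cases "g t x = b t")
        case True
        have "\<forall>v\<in>subdiff (g t) x. inner v d < 0"
          using neg True t unfolding A_def by blast
        then obtain \<sigma> where "\<sigma> > 0" "g t (x + \<sigma> *\<^sub>R d) < g t x" using descent cvg t by blast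
        then show ?thesis using True by auto
      next
        case False
        then have lt: "g t x < b t" using xfeas t by force
        have lim: "(\<lambda>k. x + inverse (real (Suc k)) *\<^sub>R d) \<longlonglongrightarrow> x"
          using tendsto_add[OF tendsto_const tendsto_scaleR[OF LIMSEQ_inverse_real_of_nat tendsto_const], of x d]
          by simp
        have ev: "eventually (\<lambda>k. (\<lambda>_. t) k \<in> T) sequentially" using t by simp
        have "(\<lambda>k. g ((\<lambda>_. t) k) (x + inverse (real (Suc k)) *\<^sub>R d)) \<longlonglongrightarrow> g t x"
          by (rule g_tendsto[OF cont tendsto_const t ev lim])
        then have "eventually (\<lambda>k. g t (x + inverse (real (Suc k)) *\<^sub>R d) < b t) sequentially"
          using order_tendstoD(2) lt by fastforce
        then obtain N where "g t (x + inverse (real (Suc N)) *\<^sub>R d) < b t"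
          unfolding eventually_sequentially by blast
        then show ?thesis by (intro exI[of _ "inverse (real (Suc N))"]) auto
      qed
    qed
    then obtain \<sigma> where \<sigma>: "\<forall>t\<in>T. \<sigma> t > 0 \<and> g t (x + \<sigma> t *\<^sub>R d) < b t"
      using bchoice[of T "\<lambda>t s. s > 0 \<and> g t (x + s *\<^sub>R d) < b t"] by blast
    have "\<forall>t\<in>T. \<exists>U. open U \<and> U \<inter> T = (\<lambda>t'. g t' (x + \<sigma> t *\<^sub>R d) - b t') -` {..<0} \<inter> T"
    proof
      fix t assume "t \<in> T"
      have "continuous_on T (\<lambda>t'. g t' (x + \<sigma> t *\<^sub>R d) - b t')"
        by (intro continuous_intros g_cont_t[OF cont] bc)
      then show "\<exists>U. open U \<and> U \<inter> T = (\<lambda>t'. g t' (x + \<sigma> t *\<^sub>R d) - b t') -` {..<0} \<inter> T"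
        unfolding continuous_on_open_invariant by (meson open_lessThan)
    qed
    then obtain U where U: "\<forall>t\<in>T. open (U t) \<and> U t \<inter> T = (\<lambda>t'. g t' (x + \<sigma> t *\<^sub>R d) - b t') -` {..<0} \<inter> T"
      using bchoice[of T "\<lambda>t U. open U \<and> U \<inter> T = (\<lambda>t'. g t' (x + \<sigma> t *\<^sub>R d) - b t') -` {..<0} \<inter> T"] by blast
    have cover: "T \<subseteq> (\<Union>t\<in>T. U t)"
    proof
      fix t assume t: "t \<in> T"
      then have "t \<in> (\<lambda>t'. g t' (x + \<sigma> t *\<^sub>R d) - b t') -` {..<0} \<inter> T" using \<sigma> by auto
      then have "t \<in> U t" using U t by blast
      then show "t \<in> (\<Union>t\<in>T. U t)" using t by blast
    qed
    obtain T' where T': "T' \<subseteq> T" "finite T'" "T \<subseteq> (\<Union>t\<in>T'. U t)"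
      using compactE_image[OF T, of T U] U cover by blast
    define s where "s = Min (insert \<sigma>0 (\<sigma> ` T'))"
    have fin: "finite (insert \<sigma>0 (\<sigma> ` T'))" using T' by simp
    have s0: "s > 0" unfolding s_def using fin \<sigma>0 \<sigma> T'(1) by (subst Min_gr_iff) auto
    have s1: "s \<le> \<sigma>0" unfolding s_def using fin by simp
    have s2: "s \<le> \<sigma> t" if "t \<in> T'" for t unfolding s_def using fin that by simp
    have feasy: "\<forall>t\<in>T. g t (x + s *\<^sub>R d) \<le> b t"
    proof
      fix t' assume t': "t' \<in> T"
      then obtain t where t: "t \<in> T'" "t' \<in> U t" using T'(3) by blast
      then have tT: "t \<in> T" using T'(1) by blast
      have "t' \<in> U t \<inter> T" using t t' by blast
      then have lt: "g t' (x + \<sigma> t *\<^sub>R d) < b t'" using U tT by auto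
      have "g t' (x + s *\<^sub>R d) \<le> (1 - s / \<sigma> t) * g t' x + (s / \<sigma> t) * g t' (x + \<sigma> t *\<^sub>R d)"
        using convex_seg[of "g t'" s "\<sigma> t" x d] cvg t' s0 s2[OF t(1)] \<sigma> tT by auto
      also have "\<dots> \<le> b t'"
        using convex_bound_le[of "g t' x" "b t'" "g t' (x + \<sigma> t *\<^sub>R d)" "1 - s / \<sigma> t" "s / \<sigma> t"]
          xfeas t' lt s0 s2[OF t(1)] \<sigma> tT by auto
      finally show "g t' (x + s *\<^sub>R d) \<le> b t'" .
    qed
    have "\<phi> (x + s *\<^sub>R d) \<le> (1 - s / \<sigma>0) * \<phi> x + (s / \<sigma>0) * \<phi> (x + \<sigma>0 *\<^sub>R d)"
      using convex_seg[OF cv\<phi>, of s \<sigma>0 x d] s0 s1 \<sigma>0 by auto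
    also have "\<dots> < (1 - s / \<sigma>0) * \<phi> x + (s / \<sigma>0) * \<phi> x"
      using \<sigma>0 s0 by (intro add_strict_left_mono mult_strict_left_mono) auto
    also have "\<dots> = \<phi> x" by (simp add: algebra_simps)
    finally have "\<phi> (x + s *\<^sub>R d) < \<phi> x" .
    moreover have "\<phi> x \<le> \<phi> (x + s *\<^sub>R d)" unfolding \<phi>_def using xopt feasy by blast
    ultimately show False by simp
  qed
  then obtain S u where S: "finite S" "S \<subseteq> P \<union> A" "\<forall>v\<in>S. 0 \<le> u v" "sum u S = 1"
    "(\<Sum>v\<in>S. u v *\<^sub>R v) = 0"
    unfolding C_def convex_hull_explicit by blast
  define S1 where "S1 = S \<inter> P"
  define S2 where "S2 = S - P"
  have S2A: "S2 \<subseteq> A" using S(2) unfolding S2_def by blast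
  have fin12: "finite S1" "finite S2" using S(1) unfolding S1_def S2_def by auto
  have sumu: "sum u S1 + sum u S2 = 1" using S(4) sum.Int_Diff[OF S(1), of u P] unfolding S1_def S2_def by simp
  have sumv: "(\<Sum>v\<in>S1. u v *\<^sub>R v) + (\<Sum>v\<in>S2. u v *\<^sub>R v) = 0"
    using S(5) sum.Int_Diff[OF S(1), of "\<lambda>v. u v *\<^sub>R v" P] unfolding S1_def S2_def by simp
  define lam where "lam = sum u S1"
  have lam0: "lam \<ge> 0" unfolding lam_def using S(3) S1_def by (auto intro: sum_nonneg)
  show ?thesis
  proof (cases "lam = 0")
    case True
    have u0: "\<forall>v\<in>S1. u v = 0" using True sum_nonneg_eq_0_iff[OF fin12(1)] S(3) unfolding lam_def S1_def by auto
    then have "(\<Sum>v\<in>S1. u v *\<^sub>R v) = 0" by simp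
    with sumv have sv2: "(\<Sum>v\<in>S2. u v *\<^sub>R v) = 0" by simp
    have su2: "sum u S2 = 1" using sumu True unfolding lam_def by simp
    obtain xh where xh: "\<forall>t\<in>T. g t xh < b t" using sl unfolding slater_def by blast
    have negv: "inner v (xh - x) < 0" if vS2: "v \<in> S2" for v
    proof -
      obtain t where t: "t \<in> T" "g t x = b t" "v \<in> subdiff (g t) x" using S2A vS2 unfolding A_def by blast
      then have "g t xh \<ge> g t x + inner v (xh - x)" unfolding subdiff_def by blast
      then show ?thesis using t xh by force
    qed
    have "\<exists>v\<in>S2. u v > 0"
    proof (rule ccontr)
      assume "\<not> (\<exists>v\<in>S2. u v > 0)"
      then have "\<forall>v\<in>S2. u v = 0" using S(3) S2_def by force
      then show False using su2 by simp
    qed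
    then have "(\<Sum>v\<in>S2. u v * inner v (xh - x)) < (\<Sum>v\<in>S2. 0)"
      using negv S(3) S2_def fin12(2)
      by (intro sum_strict_mono_ex1) (auto intro: mult_nonneg_nonpos mult_pos_neg less_imp_le)
    moreover have "(\<Sum>v\<in>S2. u v * inner v (xh - x)) = inner (\<Sum>v\<in>S2. u v *\<^sub>R v) (xh - x)"
      by (simp add: inner_sum_left)
    ultimately show ?thesis using sv2 by simp
  next
    case False
    then have lampos: "lam > 0" using lam0 by simp
    define p where "p = (\<Sum>v\<in>S1. (u v / lam) *\<^sub>R v)"
    have "p \<in> P" unfolding p_def
    proof (rule convex_sum[OF fin12(1)])
      show "convex P" unfolding P_def by (intro convex_translation convex_subdiff)
      show "(\<Sum>v\<in>S1. u v / lam) = 1" using lampos unfolding lam_def by (simp add: sum_divide_distrib[symmetric])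
      show "\<And>v. v \<in> S1 \<Longrightarrow> 0 \<le> u v / lam" using S(3) lampos S1_def by auto
      show "\<And>v. v \<in> S1 \<Longrightarrow> v \<in> P" unfolding S1_def by blast
    qed
    then obtain u0 where u0: "u0 \<in> subdiff f x" "p = c + u0" unfolding P_def by blast
    have "lam *\<^sub>R p = (\<Sum>v\<in>S1. u v *\<^sub>R v)"
      unfolding p_def scaleR_sum_right using lampos by simp
    then have "lam *\<^sub>R p = - (\<Sum>v\<in>S2. u v *\<^sub>R v)" using sumv by (simp add: eq_neg_iff_add_eq_0)
    then have "(1 / lam) *\<^sub>R (lam *\<^sub>R p) = (1 / lam) *\<^sub>R (- (\<Sum>v\<in>S2. u v *\<^sub>R v))" by simp
    then have "p = - (\<Sum>v\<in>S2. (u v / lam) *\<^sub>R v)"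
      using lampos by (simp add: scaleR_sum_right)
    then have "-(u0 + c) = (\<Sum>v\<in>S2. (u v / lam) *\<^sub>R v)"
      using u0(2) by (simp add: add.commute)
    moreover have "\<forall>v\<in>S2. 0 \<le> u v / lam" using S(3) lampos unfolding S2_def by simp
    ultimately have fin: "finite S2 \<and> S2 \<subseteq> A \<and> (\<forall>v\<in>S2. 0 \<le> u v / lam) \<and> -(u0 + c) = (\<Sum>v\<in>S2. (u v / lam) *\<^sub>R v)"
      using fin12(2) S2A by blast
    show ?thesis
    proof (rule bexI[OF _ u0(1)])
      show "\<exists>F w. finite F \<and> F \<subseteq> {v. \<exists>t\<in>T. g t x = b t \<and> v \<in> subdiff (g t) x}
           \<and> (\<forall>v\<in>F. 0 \<le> w v) \<and> -(u0 + c) = (\<Sum>v\<in>F. w v *\<^sub>R v)"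
        by (rule exI[of _ S2], rule exI[of _ "\<lambda>v. u v / lam"]) (use fin in \<open>simp add: A_def\<close>)
    qed
  qed
qed



lemma caratheodory_conic:
  fixes F :: "'a::euclidean_space set"
  assumes "finite F" "\<forall>v\<in>F. 0 \<le> w v" "p = (\<Sum>v\<in>F. w v *\<^sub>R v)"
  shows "\<exists>F' w'. F' \<subseteq> F \<and> independent F' \<and> (\<forall>v\<in>F'. 0 \<le> w' v) \<and> p = (\<Sum>v\<in>F'. w' v *\<^sub>R v)"
  using assms
proof (induct "card F" arbitrary: F w rule: less_induct)
  case less
  show ?case
  proof (cases "independent F")
    case True
    then show ?thesis using less.prems by (intro exI[of _ F] exI[of _ w]) simp
  next
    case False
    then obtain \<alpha> where \<alpha>: "\<exists>v\<in>F. \<alpha> v \<noteq> 0" "(\<Sum>v\<in>F. \<alpha> v *\<^sub>R v) = 0"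
      using dependent_finite[OF less.prems(1)] by blast
    obtain \<beta> where \<beta>: "\<exists>v\<in>F. \<beta> v > 0" "(\<Sum>v\<in>F. \<beta> v *\<^sub>R v) = 0"
    proof (cases "\<exists>v\<in>F. \<alpha> v > 0")
      case True
      then show ?thesis using \<alpha>(2) by (intro that[of \<alpha>])
    next
      case False
      then have "\<exists>v\<in>F. - \<alpha> v > 0" using \<alpha>(1) by force
      moreover have "(\<Sum>v\<in>F. (- \<alpha> v) *\<^sub>R v) = 0" using \<alpha>(2) by (simp add: sum_negf)
      ultimately show ?thesis by (intro that[of "\<lambda>v. - \<alpha> v"])
    qed
    define Fp where "Fp = {v\<in>F. \<beta> v > 0}"
    have finFp: "finite Fp" "Fp \<noteq> {}" using less.prems(1) \<beta>(1) unfolding Fp_def by auto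
    define \<theta> where "\<theta> = Min ((\<lambda>v. w v / \<beta> v) ` Fp)"
    have "\<theta> \<in> (\<lambda>v. w v / \<beta> v) ` Fp" unfolding \<theta>_def using finFp by (intro Min_in) auto
    then obtain v0 where v0: "v0 \<in> Fp" "\<theta> = w v0 / \<beta> v0" by blast
    have \<theta>le: "\<theta> \<le> w v / \<beta> v" if "v \<in> Fp" for v
      unfolding \<theta>_def using finFp that by simp
    have v0F: "v0 \<in> F" "\<beta> v0 > 0" using v0(1) unfolding Fp_def by auto
    have \<theta>0: "\<theta> \<ge> 0" using v0 v0F less.prems(2) by auto
    define w' where "w' = (\<lambda>v. w v - \<theta> * \<beta> v)"
    have w'0: "\<forall>v\<in>F. 0 \<le> w' v"
    proof
      fix v assume v: "v \<in> F"
      show "0 \<le> w' v"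
      proof (cases "\<beta> v > 0")
        case True
        then have "\<theta> \<le> w v / \<beta> v" using \<theta>le v unfolding Fp_def by auto
        then have "\<theta> * \<beta> v \<le> w v" using True by (simp add: pos_le_divide_eq)
        then show ?thesis unfolding w'_def by simp
      next
        case False
        then have "\<theta> * \<beta> v \<le> 0" using \<theta>0 by (simp add: mult_nonneg_nonpos)
        then show ?thesis unfolding w'_def using less.prems(2) v by force
      qed
    qed
    have w'v0: "w' v0 = 0" unfolding w'_def using v0(2) v0F(2) by simp
    have "(\<Sum>v\<in>F. w' v *\<^sub>R v) = (\<Sum>v\<in>F. w v *\<^sub>R v) - \<theta> *\<^sub>R (\<Sum>v\<in>F. \<beta> v *\<^sub>R v)"
      unfolding w'_def by (simp add: scaleR_diff_left sum_subtractf scaleR_sum_right)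
    then have pw': "p = (\<Sum>v\<in>F. w' v *\<^sub>R v)" using \<beta>(2) less.prems(3) by simp
    define F1 where "F1 = F - {v0}"
    have "(\<Sum>v\<in>F. w' v *\<^sub>R v) = w' v0 *\<^sub>R v0 + (\<Sum>v\<in>F1. w' v *\<^sub>R v)"
      unfolding F1_def using less.prems(1) v0F(1) by (simp add: sum.remove)
    then have pF1: "p = (\<Sum>v\<in>F1. w' v *\<^sub>R v)" using pw' w'v0 by simp
    have cF1: "card F1 < card F" unfolding F1_def using less.prems(1) v0F(1) by (rule card_Diff1_less)
    have "finite F1" "\<forall>v\<in>F1. 0 \<le> w' v" using less.prems(1) w'0 unfolding F1_def by auto
    from less.hyps[OF cF1 this pF1] obtain F' w'' where
      h: "F' \<subseteq> F1" "independent F'" "\<forall>v\<in>F'. 0 \<le> w'' v" "p = (\<Sum>v\<in>F'. w'' v *\<^sub>R v)"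
      by (elim exE conjE) simp
    moreover have "F1 \<subseteq> F" unfolding F1_def by blast
    ultimately show ?thesis by (intro exI[of _ F'] exI[of _ w'']) auto
  qed
qed

lemma KKT_n:
  fixes T :: "'z::metric_space set" and f :: "real^'n \<Rightarrow> real" and g :: "'z \<Rightarrow> real^'n \<Rightarrow> real"
  assumes T: "compact T" and cvf: "convex_on UNIV f" and cvg: "\<forall>t\<in>T. convex_on UNIV (g t)"
    and cont: "continuous_on (T \<times> UNIV) (\<lambda>(t, x). g t x)" and bc: "continuous_on T b"
    and opt: "x \<in> optset T f g c b" and sl: "slater T g b" and Tne: "T \<noteq> {}"
  shows "\<exists>u\<in>subdiff f x. \<exists>\<tau> \<nu> \<omega>. (\<forall>i::'n. \<tau> i \<in> T) \<and> (\<forall>i. 0 \<le> \<omega> i)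
     \<and> (\<forall>i. \<nu> i = 0 \<or> \<nu> i \<in> subdiff (g (\<tau> i)) x)
     \<and> (\<forall>i. \<omega> i > 0 \<longrightarrow> g (\<tau> i) x = b (\<tau> i) \<and> \<nu> i \<in> subdiff (g (\<tau> i)) x)
     \<and> -(u + c) = (\<Sum>i\<in>UNIV. \<omega> i *\<^sub>R \<nu> i)"
proof -
  obtain u F w where u: "u \<in> subdiff f x" and F: "finite F" "F \<subseteq> {v. \<exists>t\<in>T. g t x = b t \<and> v \<in> subdiff (g t) x}"
    "\<forall>v\<in>F. 0 \<le> w v" "-(u + c) = (\<Sum>v\<in>F. w v *\<^sub>R v)"
    using KKT[OF T cvf cvg cont bc opt sl] by (elim bexE exE conjE) blast
  obtain F' w' where F': "F' \<subseteq> F" "independent F'" "\<forall>v\<in>F'. 0 \<le> w' v" "-(u + c) = (\<Sum>v\<in>F'. w' v *\<^sub>R v)"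
    using caratheodory_conic[OF F(1) F(3) F(4)] by (elim exE conjE) simp
  have finF': "finite F'" using F(1) F'(1) finite_subset by blast
  have "card F' = dim F'" using dim_eq_card_independent[OF F'(2)] by simp
  also have "\<dots> \<le> CARD('n)" by (rule dim_subset_UNIV_cart)
  finally have cardF': "card F' \<le> card (UNIV :: 'n set)" .
  obtain e :: "real^'n \<Rightarrow> 'n" where e: "inj_on e F'"
    using card_le_inj[OF finF' finite_class.finite_UNIV cardF'] by blast
  have "\<forall>v\<in>F'. \<exists>t. t \<in> T \<and> g t x = b t \<and> v \<in> subdiff (g t) x" using F(2) F'(1) by blast
  then obtain tv where tv: "\<forall>v\<in>F'. tv v \<in> T \<and> g (tv v) x = b (tv v) \<and> v \<in> subdiff (g (tv v)) x"
    using bchoice[of F' "\<lambda>v t. t \<in> T \<and> g t x = b t \<and> v \<in> subdiff (g t) x"] by blast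
  obtain t0 where t0: "t0 \<in> T" using Tne by blast
  define ii where "ii = inv_into F' e"
  define \<tau> where "\<tau> = (\<lambda>i. if i \<in> e ` F' then tv (ii i) else t0)"
  define \<nu> where "\<nu> = (\<lambda>i. if i \<in> e ` F' then ii i else 0)"
  define \<omega> where "\<omega> = (\<lambda>i. if i \<in> e ` F' then w' (ii i) else 0)"
  have iiF: "ii i \<in> F'" if "i \<in> e ` F'" for i unfolding ii_def using that by (rule inv_into_into)
  have p1: "\<forall>i. \<tau> i \<in> T" unfolding \<tau>_def using tv iiF t0 by auto
  have p2: "\<forall>i. 0 \<le> \<omega> i" unfolding \<omega>_def using F'(3) iiF by auto
  have p3: "\<forall>i. \<nu> i = 0 \<or> \<nu> i \<in> subdiff (g (\<tau> i)) x" unfolding \<nu>_def \<tau>_def using tv iiF by auto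
  have p4: "\<forall>i. \<omega> i > 0 \<longrightarrow> g (\<tau> i) x = b (\<tau> i) \<and> \<nu> i \<in> subdiff (g (\<tau> i)) x"
    unfolding \<nu>_def \<tau>_def \<omega>_def using tv iiF by auto
  have "(\<Sum>i\<in>UNIV. \<omega> i *\<^sub>R \<nu> i) = (\<Sum>i\<in>e ` F'. \<omega> i *\<^sub>R \<nu> i)"
    by (rule sum.mono_neutral_right) (auto simp: \<omega>_def)
  also have "\<dots> = (\<Sum>v\<in>F'. \<omega> (e v) *\<^sub>R \<nu> (e v))" by (rule sum.reindex[OF e, unfolded o_def])
  also have "\<dots> = (\<Sum>v\<in>F'. w' v *\<^sub>R v)"
    by (rule sum.cong) (auto simp: \<omega>_def \<nu>_def ii_def inv_into_f_f[OF e])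
  finally have p5: "-(u + c) = (\<Sum>i\<in>UNIV. \<omega> i *\<^sub>R \<nu> i)" using F'(4) by simp
  have "\<exists>\<tau> \<nu> \<omega>. (\<forall>i::'n. \<tau> i \<in> T) \<and> (\<forall>i. 0 \<le> \<omega> i)
     \<and> (\<forall>i. \<nu> i = 0 \<or> \<nu> i \<in> subdiff (g (\<tau> i)) x)
     \<and> (\<forall>i. \<omega> i > 0 \<longrightarrow> g (\<tau> i) x = b (\<tau> i) \<and> \<nu> i \<in> subdiff (g (\<tau> i)) x)
     \<and> -(u + c) = (\<Sum>i\<in>UNIV. \<omega> i *\<^sub>R \<nu> i)"
    by (rule exI[of _ \<tau>], rule exI[of _ \<nu>], rule exI[of _ \<omega>]) (use p1 p2 p3 p4 p5 in blast)
  then show ?thesis using u by blast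
qed



lemma supnorm_ge:
  fixes h :: "'z::topological_space \<Rightarrow> real"
  assumes "compact T" "continuous_on T h" "t \<in> T"
  shows "\<bar>h t\<bar> \<le> supnorm T h"
proof -
  have "compact ((\<lambda>t. \<bar>h t\<bar>) ` T)" using assms(1,2) by (intro compact_continuous_image continuous_intros)
  then obtain M where M: "\<forall>z\<in>(\<lambda>t. \<bar>h t\<bar>) ` T. norm z \<le> M"
    using compact_imp_bounded[of "(\<lambda>t. \<bar>h t\<bar>) ` T"] unfolding bounded_iff by blast
  have "bdd_above ((\<lambda>t. \<bar>h t\<bar>) ` T)"
  proof (rule bdd_aboveI)
    fix z assume "z \<in> (\<lambda>t. \<bar>h t\<bar>) ` T"
    then show "z \<le> M" using M by force
  qed
  then have "bdd_above (insert 0 ((\<lambda>t. \<bar>h t\<bar>) ` T))" by simp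
  then show ?thesis unfolding supnorm_def using assms(3) by (intro cSup_upper) auto
qed

lemma supnorm_nonneg:
  fixes h :: "'z::topological_space \<Rightarrow> real"
  assumes "compact T" "continuous_on T h"
  shows "0 \<le> supnorm T h"
proof (cases "T = {}")
  case True
  then show ?thesis unfolding supnorm_def by simp
next
  case False
  then obtain t where "t \<in> T" by blast
  then show ?thesis using supnorm_ge[OF assms] by (meson abs_ge_zero order_trans)
qed

lemma seq_inverse_tendsto:
  fixes X :: "nat \<Rightarrow> 'a::metric_space"
  assumes "\<forall>k. dist (X k) L < inverse (real (Suc k))"
  shows "X \<longlonglongrightarrow> L"
proof (rule metric_LIMSEQ_I)
  fix r :: real assume "0 < r"
  then obtain N :: nat where N: "N > 0" "inverse (real N) < r" using ex_inverse_of_nat_less by blast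
  show "\<exists>no. \<forall>n\<ge>no. dist (X n) L < r"
  proof (intro exI allI impI)
    fix n assume "N \<le> n"
    then have "inverse (real (Suc n)) \<le> inverse (real N)" using N(1) by (simp add: le_imp_inverse_le)
    moreover have "dist (X n) L < inverse (real (Suc n))" using assms by blast
    ultimately show "dist (X n) L < r" using N(2) by linarith
  qed
qed

lemma fin_subseq:
  fixes s :: "nat \<Rightarrow> 'i::finite \<Rightarrow> 'a::metric_space"
  assumes K: "compact K" and s: "\<forall>k i. s k i \<in> K"
  shows "\<exists>r l. strict_mono r \<and> (\<forall>i. l i \<in> K \<and> (\<lambda>k. s (r k) i) \<longlonglongrightarrow> l i)"
proof -
  have "\<exists>r l. strict_mono r \<and> (\<forall>i\<in>I. l i \<in> K \<and> (\<lambda>k. s (r k) i) \<longlonglongrightarrow> l i)" if "finite I" for I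
    using that
  proof (induct I rule: finite_induct)
    case empty
    show ?case by (intro exI[of _ id] exI[of _ "\<lambda>_. undefined"]) (auto simp: strict_mono_def)
  next
    case (insert j I)
    then obtain r l where r: "strict_mono r" "\<forall>i\<in>I. l i \<in> K \<and> (\<lambda>k. s (r k) i) \<longlonglongrightarrow> l i"
      by (elim exE conjE) simp
    have "\<forall>k. (\<lambda>k. s (r k) j) k \<in> K" using s by simp
    then obtain lj r2 where lj: "lj \<in> K" "strict_mono r2" "((\<lambda>k. s (r k) j) \<circ> r2) \<longlonglongrightarrow> lj"
      using seq_compactE[OF compact_imp_seq_compact[OF K]] by metis
    have sm: "strict_mono (r \<circ> r2)" using r(1) lj(2) by (rule strict_mono_o)
    have "\<forall>i\<in>insert j I. (l(j := lj)) i \<in> K \<and> (\<lambda>k. s ((r \<circ> r2) k) i) \<longlonglongrightarrow> (l(j := lj)) i"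
    proof
      fix i assume i: "i \<in> insert j I"
      show "(l(j := lj)) i \<in> K \<and> (\<lambda>k. s ((r \<circ> r2) k) i) \<longlonglongrightarrow> (l(j := lj)) i"
      proof (cases "i = j")
        case True
        then show ?thesis using lj by (simp add: o_def)
      next
        case False
        then have iI: "i \<in> I" using i by simp
        have "((\<lambda>k. s (r k) i) \<circ> r2) \<longlonglongrightarrow> l i" using LIMSEQ_subseq_LIMSEQ[OF _ lj(2)] r(2) iI by blast
        then show ?thesis using False r(2) iI by (simp add: o_def)
      qed
    qed
    then show ?case using sm by (intro exI[of _ "r \<circ> r2"] exI[of _ "l(j := lj)"]) (simp only: simp_thms)
  qed
  from this[OF finite_class.finite_UNIV] show ?thesis by simp
qed

lemma conv_cone_sum:
  fixes \<nu> :: "'i \<Rightarrow> 'a::real_vector"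
  assumes "finite I" "\<forall>i\<in>I. 0 \<le> \<omega> i \<and> \<nu> i \<in> A"
  shows "(\<Sum>i\<in>I. \<omega> i *\<^sub>R \<nu> i) \<in> conv_cone A"
proof -
  define w where "w = (\<lambda>v. \<Sum>i\<in>{i\<in>I. \<nu> i = v}. \<omega> i)"
  have "(\<Sum>i\<in>I. \<omega> i *\<^sub>R \<nu> i) = (\<Sum>v\<in>\<nu> ` I. \<Sum>i\<in>{i\<in>I. \<nu> i = v}. \<omega> i *\<^sub>R \<nu> i)"
    by (rule sum.image_gen[OF assms(1)])
  also have "\<dots> = (\<Sum>v\<in>\<nu> ` I. w v *\<^sub>R v)"
    unfolding w_def scaleR_sum_left by (intro sum.cong refl) auto
  finally have eq: "(\<Sum>i\<in>I. \<omega> i *\<^sub>R \<nu> i) = (\<Sum>v\<in>\<nu> ` I. w v *\<^sub>R v)" .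
  have "finite (\<nu> ` I)" "\<nu> ` I \<subseteq> A" "\<forall>v\<in>\<nu> ` I. 0 \<le> w v"
    using assms unfolding w_def by (auto intro: sum_nonneg)
  then show ?thesis unfolding conv_cone_def eq by blast
qed

lemma suff_opt:
  fixes \<nu> :: "'i \<Rightarrow> 'a::real_inner"
  assumes x: "x \<in> feas T g b" and u: "u \<in> subdiff f x" and fin: "finite I"
    and w0: "\<forall>i\<in>I. 0 \<le> \<omega> i"
    and act: "\<forall>i\<in>I. \<omega> i > 0 \<longrightarrow> \<tau> i \<in> T \<and> g (\<tau> i) x = b (\<tau> i) \<and> \<nu> i \<in> subdiff (g (\<tau> i)) x"
    and eq: "-(u + c) = (\<Sum>i\<in>I. \<omega> i *\<^sub>R \<nu> i)"
  shows "x \<in> optset T f g c b"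
  unfolding optset_def
proof (intro CollectI conjI ballI x)
  fix y assume y: "y \<in> feas T g b"
  have each: "\<omega> i * inner (\<nu> i) (y - x) \<le> 0" if i: "i \<in> I" for i
  proof (cases "\<omega> i > 0")
    case True
    then have h: "\<tau> i \<in> T" "g (\<tau> i) x = b (\<tau> i)" "\<nu> i \<in> subdiff (g (\<tau> i)) x" using act i by auto
    then have "g (\<tau> i) y \<ge> g (\<tau> i) x + inner (\<nu> i) (y - x)" unfolding subdiff_def by blast
    moreover have "g (\<tau> i) y \<le> b (\<tau> i)" using y h(1) unfolding feas_def by blast
    ultimately have "inner (\<nu> i) (y - x) \<le> 0" using h(2) by linarith
    then show ?thesis using True by (simp add: mult_nonneg_nonpos)
  next
    case False
    then have "\<omega> i = 0" using w0 i by force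
    then show ?thesis by simp
  qed
  have "inner (u + c) (y - x) = - (\<Sum>i\<in>I. \<omega> i * inner (\<nu> i) (y - x))"
  proof -
    have "inner (u + c) (y - x) = - inner (-(u + c)) (y - x)" by (simp only: inner_minus_left minus_minus)
    also have "\<dots> = - (\<Sum>i\<in>I. \<omega> i * inner (\<nu> i) (y - x))" unfolding eq by (simp add: inner_sum_left)
    finally show ?thesis .
  qed
  moreover have "(\<Sum>i\<in>I. \<omega> i * inner (\<nu> i) (y - x)) \<le> 0" using each by (intro sum_nonpos) auto
  ultimately have ge: "inner (u + c) (y - x) \<ge> 0" by linarith
  have "f y \<ge> f x + inner u (y - x)" using u unfolding subdiff_def by blast
  moreover have "inner (u + c) (y - x) = inner u (y - x) + inner c y - inner c x"
    by (simp add: inner_add_left inner_diff_right)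
  ultimately show "f x + inner c x \<le> f y + inner c y" using ge by linarith
qed



lemma enc_family:
  fixes f :: "real^'n \<Rightarrow> real" and g :: "'z \<Rightarrow> real^'n \<Rightarrow> real" and \<omega> :: "'n \<Rightarrow> real"
  assumes enc: "ENC T f g cb bb xb" and u: "u \<in> subdiff f xb"
    and w0: "\<forall>i. 0 \<le> \<omega> i"
    and act: "\<forall>i. \<omega> i > 0 \<longrightarrow> \<tau> i \<in> T \<and> g (\<tau> i) xb = bb (\<tau> i) \<and> \<nu> i \<in> subdiff (g (\<tau> i)) xb"
    and eq: "-(u + cb) = (\<Sum>i\<in>UNIV. \<omega> i *\<^sub>R \<nu> i)"
  shows "\<forall>i. \<omega> i > 0"
proof -
  define I where "I = {i. \<omega> i > 0}"
  define D where "D = \<tau> ` I"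
  have DA: "D \<subseteq> active T g bb xb" unfolding D_def I_def active_def using act by auto
  have finD: "finite D" unfolding D_def by simp
  have "(\<Sum>i\<in>UNIV. \<omega> i *\<^sub>R \<nu> i) = (\<Sum>i\<in>I. \<omega> i *\<^sub>R \<nu> i)"
  proof (rule sum.mono_neutral_right)
    show "\<forall>i\<in>UNIV - I. \<omega> i *\<^sub>R \<nu> i = 0"
    proof
      fix i assume "i \<in> UNIV - I"
      then have "\<omega> i = 0" using w0 unfolding I_def by (simp add: not_less order.antisym)
      then show "\<omega> i *\<^sub>R \<nu> i = 0" by simp
    qed
  qed auto
  also have "\<dots> \<in> conv_cone (\<Union>t\<in>D. subdiff (g t) xb)"
  proof (rule conv_cone_sum)
    show "\<forall>i\<in>I. 0 \<le> \<omega> i \<and> \<nu> i \<in> (\<Union>t\<in>D. subdiff (g t) xb)"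
      unfolding D_def I_def using act w0 by blast
  qed simp
  finally have "-(u + cb) \<in> conv_cone (\<Union>t\<in>D. subdiff (g t) xb)" using eq by simp
  moreover have "-(u + cb) \<in> (\<lambda>u. - (u + cb)) ` subdiff f xb" using u by blast
  ultimately have ne: "((\<lambda>u. - (u + cb)) ` subdiff f xb) \<inter> conv_cone (\<Union>t\<in>D. subdiff (g t) xb) \<noteq> {}" by blast
  have "\<not> card D < CARD('n)"
  proof
    assume "card D < CARD('n)"
    then show False using enc DA finD ne unfolding ENC_def by blast
  qed
  moreover have "card D \<le> card I" unfolding D_def by (rule card_image_le) simp
  moreover have "card I \<le> CARD('n)" by (rule card_mono) auto
  ultimately have "card I = CARD('n)" by linarith
  then have "I = UNIV" by (simp add: card_eq_UNIV_imp_eq_UNIV)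
  then show ?thesis unfolding I_def by blast
qed

lemma enc_indep:
  fixes f :: "real^'n \<Rightarrow> real" and g :: "'z \<Rightarrow> real^'n \<Rightarrow> real" and \<omega> :: "'n \<Rightarrow> real"
  assumes enc: "ENC T f g cb bb xb" and u: "u \<in> subdiff f xb"
    and wpos: "\<forall>i. 0 < \<omega> i"
    and act: "\<forall>i. \<tau> i \<in> T \<and> g (\<tau> i) xb = bb (\<tau> i) \<and> \<nu> i \<in> subdiff (g (\<tau> i)) xb"
    and eq: "-(u + cb) = (\<Sum>i\<in>UNIV. \<omega> i *\<^sub>R \<nu> i)"
    and z: "(\<Sum>i\<in>UNIV. \<alpha> i *\<^sub>R \<nu> i) = 0"
  shows "\<forall>i. \<alpha> i = 0"
proof (rule ccontr)
  assume "\<not> (\<forall>i. \<alpha> i = 0)"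
  then have \<alpha>: "\<exists>i. \<alpha> i \<noteq> 0" by blast
  obtain \<beta> :: "'n \<Rightarrow> real" where \<beta>: "\<exists>i. \<beta> i > 0" "(\<Sum>i\<in>UNIV. \<beta> i *\<^sub>R \<nu> i) = 0"
  proof (cases "\<exists>i. \<alpha> i > 0")
    case True
    then show ?thesis using z by (intro that[of \<alpha>])
  next
    case False
    then have "\<exists>i. - \<alpha> i > 0" using \<alpha> by (meson neg_0_less_iff_less not_less_iff_gr_or_eq)
    moreover have "(\<Sum>i\<in>UNIV. (- \<alpha> i) *\<^sub>R \<nu> i) = 0" using z by (simp add: sum_negf)
    ultimately show ?thesis by (intro that[of "\<lambda>i. - \<alpha> i"])
  qed
  define Ip where "Ip = {i. \<beta> i > 0}"
  have finIp: "finite Ip" "Ip \<noteq> {}" using \<beta>(1) unfolding Ip_def by auto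
  define \<theta> where "\<theta> = Min ((\<lambda>i. \<omega> i / \<beta> i) ` Ip)"
  have "\<theta> \<in> (\<lambda>i. \<omega> i / \<beta> i) ` Ip" unfolding \<theta>_def using finIp by (intro Min_in) auto
  then obtain i0 where i0: "i0 \<in> Ip" "\<theta> = \<omega> i0 / \<beta> i0" by blast
  have \<theta>le: "\<theta> \<le> \<omega> i / \<beta> i" if "i \<in> Ip" for i
    unfolding \<theta>_def using finIp that by simp
  have bi0: "\<beta> i0 > 0" using i0(1) unfolding Ip_def by auto
  have \<theta>0: "\<theta> \<ge> 0" using i0(2) bi0 wpos by (simp add: less_imp_le)
  define \<omega>' where "\<omega>' = (\<lambda>i. \<omega> i - \<theta> * \<beta> i)"
  have w'0: "\<forall>i. 0 \<le> \<omega>' i"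
  proof
    fix i
    show "0 \<le> \<omega>' i"
    proof (cases "\<beta> i > 0")
      case True
      then have "\<theta> \<le> \<omega> i / \<beta> i" using \<theta>le unfolding Ip_def by auto
      then have "\<theta> * \<beta> i \<le> \<omega> i" using True by (simp add: pos_le_divide_eq)
      then show ?thesis unfolding \<omega>'_def by simp
    next
      case False
      then have "\<theta> * \<beta> i \<le> 0" using \<theta>0 by (simp add: mult_nonneg_nonpos)
      moreover have "0 \<le> \<omega> i" using wpos less_imp_le by blast
      ultimately show ?thesis unfolding \<omega>'_def by linarith
    qed
  qed
  have w'i0: "\<omega>' i0 = 0" unfolding \<omega>'_def using i0(2) bi0 by simp
  have "(\<Sum>i\<in>UNIV. \<omega>' i *\<^sub>R \<nu> i) = (\<Sum>i\<in>UNIV. \<omega> i *\<^sub>R \<nu> i) - \<theta> *\<^sub>R (\<Sum>i\<in>UNIV. \<beta> i *\<^sub>R \<nu> i)"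
    unfolding \<omega>'_def by (simp add: scaleR_diff_left sum_subtractf scaleR_sum_right)
  then have eq': "-(u + cb) = (\<Sum>i\<in>UNIV. \<omega>' i *\<^sub>R \<nu> i)" using \<beta>(2) eq by simp
  have "\<forall>i. \<omega>' i > 0" using enc_family[OF enc u w'0 _ eq'] act by blast
  then show False using w'i0 by (metis less_irrefl)
qed



lemma key:
  fixes T :: "'z::metric_space set" and f :: "real^'n \<Rightarrow> real" and g :: "'z \<Rightarrow> real^'n \<Rightarrow> real"
  assumes T: "compact T" and cvf: "convex_on UNIV f" and cvg: "\<forall>t\<in>T. convex_on UNIV (g t)"
    and cont: "continuous_on (T \<times> UNIV) (\<lambda>(t, x). g t x)"
    and bbc: "bb \<in> CT T" and opt: "xb \<in> optset T f g cb bb" and enc: "ENC T f g cb bb xb"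
  shows "\<exists>\<delta>>0. \<forall>c b x. norm (c - cb) < \<delta> \<longrightarrow> b \<in> CT T \<longrightarrow> supnorm T (\<lambda>t. b t - bb t) < \<delta>
            \<longrightarrow> x \<in> optset T f g c b \<longrightarrow> dist x xb < \<delta> \<longrightarrow> x \<in> optset T f g cb b"
proof -
  have bbcont: "continuous_on T bb" using bbc unfolding CT_def by simp
  have sl: "slater T g bb" using enc unfolding ENC_def by simp
  have Tne: "T \<noteq> {}"
  proof
    assume T0: "T = {}"
    have "- cb \<in> subdiff f xb"
      unfolding subdiff_def
    proof (intro CollectI allI)
      fix y
      have "y \<in> feas T g bb" using T0 unfolding feas_def by simp
      then have "f xb + inner cb xb \<le> f y + inner cb y" using opt unfolding optset_def by blast
      then show "f xb + inner (- cb) (y - xb) \<le> f y" by (simp add: inner_diff_right)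
    qed
    then have "(0::real^'n) \<in> (\<lambda>u. - (u + cb)) ` subdiff f xb" by force
    moreover have "(0::real^'n) \<in> conv_cone (\<Union>t\<in>{}. subdiff (g t) xb)"
      unfolding conv_cone_def by (intro CollectI exI[of _ "{}"]) simp
    ultimately have "((\<lambda>u. - (u + cb)) ` subdiff f xb) \<inter> conv_cone (\<Union>t\<in>{}. subdiff (g t) xb) \<noteq> {}" by blast
    moreover have "{} \<subseteq> active T g bb xb" "finite {}" "card {} < CARD('n)" by auto
    ultimately show False using enc unfolding ENC_def by blast
  qed
  obtain xh where xh: "\<forall>t\<in>T. g t xh < bb t" using sl unfolding slater_def by blast
  have "continuous_on T (\<lambda>t. bb t - g t xh)" by (intro continuous_intros bbcont g_cont_t[OF cont])
  then obtain t1 where t1: "t1 \<in> T" "\<forall>t\<in>T. bb t1 - g t1 xh \<le> bb t - g t xh"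
    using continuous_attains_inf[OF T Tne] by blast
  define \<epsilon>0 where "\<epsilon>0 = bb t1 - g t1 xh"
  have \<epsilon>0: "\<epsilon>0 > 0" unfolding \<epsilon>0_def using xh t1(1) by force
  have xhm: "\<forall>t\<in>T. g t xh \<le> bb t - \<epsilon>0" unfolding \<epsilon>0_def using t1(2) by force
  obtain Mg where Mg: "\<forall>t\<in>T. \<forall>y\<in>cball xb 2. \<bar>g t y\<bar> \<le> Mg" using cont_bound[OF T cont] by blast
  obtain Mf where Mf0: "\<forall>t\<in>{0::real}. \<forall>y\<in>cball xb 2. \<bar>f y\<bar> \<le> Mf"
    using cont_bound[OF compact_sing f_cont_form[OF cvf]] by blast
  then have Mf: "\<forall>y\<in>cball xb 2. \<bar>f y\<bar> \<le> Mf" by simp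
  obtain t0 where t0: "t0 \<in> T" using Tne by blast
  have "\<bar>g t0 xb\<bar> \<le> Mg" using Mg t0 by simp
  then have Mg0: "Mg \<ge> 0" by linarith
  define W where "W = 2 * ((2 * Mf + norm cb + 1) * (dist xh xb + 1)) / \<epsilon>0"
  show ?thesis
  proof (rule ccontr)
    assume neg: "\<not> ?thesis"
    define \<delta> where "\<delta> = (\<lambda>k::nat. min (\<epsilon>0 / 2) (inverse (real (Suc k))))"
    have \<delta>pos: "\<delta> k > 0" for k unfolding \<delta>_def using \<epsilon>0 by simp
    define Q where "Q = (\<lambda>k c b x. norm (c - cb) < \<delta> k \<and> b \<in> CT T \<and> supnorm T (\<lambda>t. b t - bb t) < \<delta> k
            \<and> x \<in> optset T f g c b \<and> dist x xb < \<delta> k \<and> x \<notin> optset T f g cb b)"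
    have "\<forall>k. \<exists>c b x. Q k c b x"
    proof
      fix k
      show "\<exists>c b x. Q k c b x" using neg \<delta>pos[of k] unfolding Q_def by blast
    qed
    then obtain cs where "\<forall>k. \<exists>b x. Q k (cs k) b x" by (metis choice)
    then obtain bs where "\<forall>k. \<exists>x. Q k (cs k) (bs k) x" by (metis choice)
    then obtain xs where Qk: "\<forall>k. Q k (cs k) (bs k) (xs k)" by (metis choice)

    have \<delta>le: "\<delta> k \<le> \<epsilon>0 / 2" "\<delta> k \<le> inverse (real (Suc k))" for k unfolding \<delta>_def by auto
    have \<delta>le1: "\<delta> k \<le> 1" for k
    proof -
      have "inverse (real (Suc k)) \<le> inverse 1" by (rule le_imp_inverse_le) auto
      then show ?thesis using \<delta>le(2)[of k] by simp
    qed
    have csk: "norm (cs k - cb) < \<delta> k" and bsCT: "bs k \<in> CT T"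
      and bsn: "supnorm T (\<lambda>t. bs k t - bb t) < \<delta> k" and xopt: "xs k \<in> optset T f g (cs k) (bs k)"
      and xd: "dist (xs k) xb < \<delta> k" and xnopt: "xs k \<notin> optset T f g cb (bs k)" for k
      using Qk unfolding Q_def by auto
    have bscont: "continuous_on T (bs k)" for k using bsCT unfolding CT_def by simp
    have bsdiff: "\<bar>bs k t - bb t\<bar> < \<delta> k" if "t \<in> T" for k t
    proof -
      have "continuous_on T (\<lambda>t. bs k t - bb t)" by (intro continuous_intros bscont bbcont)
      from supnorm_ge[OF T this that] show ?thesis using bsn[of k] by linarith
    qed
    have slk: "slater T g (bs k)" for k
      unfolding slater_def
    proof (intro exI[of _ xh] ballI)
      fix t assume t: "t \<in> T"
      show "g t xh < bs k t" using xhm t bsdiff[OF t, of k] \<delta>le(1)[of k] \<epsilon>0 by force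
    qed
    define R where "R = (\<lambda>k u \<tau> \<nu> \<omega>. u \<in> subdiff f (xs k) \<and> (\<forall>i::'n. \<tau> i \<in> T) \<and> (\<forall>i. 0 \<le> \<omega> i)
     \<and> (\<forall>i. \<nu> i = 0 \<or> \<nu> i \<in> subdiff (g (\<tau> i)) (xs k))
     \<and> (\<forall>i. \<omega> i > 0 \<longrightarrow> g (\<tau> i) (xs k) = bs k (\<tau> i) \<and> \<nu> i \<in> subdiff (g (\<tau> i)) (xs k))
     \<and> -(u + cs k) = (\<Sum>i\<in>UNIV. \<omega> i *\<^sub>R \<nu> i))"
    have "\<forall>k. \<exists>u \<tau> \<nu> \<omega>. R k u \<tau> \<nu> \<omega>"
    proof
      fix k
      have "\<exists>u\<in>subdiff f (xs k). \<exists>\<tau> \<nu> \<omega>. (\<forall>i::'n. \<tau> i \<in> T) \<and> (\<forall>i. 0 \<le> \<omega> i)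
     \<and> (\<forall>i. \<nu> i = 0 \<or> \<nu> i \<in> subdiff (g (\<tau> i)) (xs k))
     \<and> (\<forall>i. \<omega> i > 0 \<longrightarrow> g (\<tau> i) (xs k) = bs k (\<tau> i) \<and> \<nu> i \<in> subdiff (g (\<tau> i)) (xs k))
     \<and> -(u + cs k) = (\<Sum>i\<in>UNIV. \<omega> i *\<^sub>R \<nu> i)"
        by (rule KKT_n[OF T cvf cvg cont bscont xopt slk Tne])
      then show "\<exists>u \<tau> \<nu> \<omega>. R k u \<tau> \<nu> \<omega>" unfolding R_def by blast
    qed
    then obtain us where "\<forall>k. \<exists>\<tau> \<nu> \<omega>. R k (us k) \<tau> \<nu> \<omega>" by (metis choice)
    then obtain \<tau>s where "\<forall>k. \<exists>\<nu> \<omega>. R k (us k) (\<tau>s k) \<nu> \<omega>" by (metis choice)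
    then obtain \<nu>s where "\<forall>k. \<exists>\<omega>. R k (us k) (\<tau>s k) (\<nu>s k) \<omega>" by (metis choice)
    then obtain \<omega>s where Rk: "\<forall>k. R k (us k) (\<tau>s k) (\<nu>s k) (\<omega>s k)" by (metis choice)
    have us: "us k \<in> subdiff f (xs k)" and \<tau>sT: "\<tau>s k i \<in> T" and \<omega>s0: "0 \<le> \<omega>s k i"
      and \<nu>s: "\<nu>s k i = 0 \<or> \<nu>s k i \<in> subdiff (g (\<tau>s k i)) (xs k)"
      and actk: "\<omega>s k i > 0 \<Longrightarrow> g (\<tau>s k i) (xs k) = bs k (\<tau>s k i) \<and> \<nu>s k i \<in> subdiff (g (\<tau>s k i)) (xs k)"
      and eqk: "-(us k + cs k) = (\<Sum>i\<in>UNIV. \<omega>s k i *\<^sub>R \<nu>s k i)" for k i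
      using Rk unfolding R_def by auto
    have cb2: "cball (xs k) 1 \<subseteq> cball xb 2" for k
    proof
      fix y assume "y \<in> cball (xs k) 1"
      then have "dist (xs k) y \<le> 1" by simp
      moreover have "dist xb (xs k) < 1" using xd[of k] \<delta>le1[of k] by (simp add: dist_commute)
      ultimately show "y \<in> cball xb 2" using dist_triangle[of xb y "xs k"] by simp
    qed
    have Mfk: "\<forall>y\<in>cball (xs k) 1. \<bar>f y\<bar> \<le> Mf" for k using Mf cb2[of k] by blast
    have Mgk: "\<forall>y\<in>cball (xs k) 1. \<bar>g t y\<bar> \<le> Mg" if "t \<in> T" for k t using Mg cb2[of k] that by blast
    have usb: "norm (us k) \<le> 2 * Mf" for k
      by (rule subgrad_norm_bound[OF us[of k] Mfk])
    have \<nu>sb: "norm (\<nu>s k i) \<le> 2 * Mg" for k i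
    proof (cases "\<nu>s k i = 0")
      case True then show ?thesis using Mg0 by simp
    next
      case False
      then have "\<nu>s k i \<in> subdiff (g (\<tau>s k i)) (xs k)" using \<nu>s by blast
      then show ?thesis by (rule subgrad_norm_bound[OF _ Mgk[OF \<tau>sT[of k i]]])
    qed

    have \<omega>sW: "\<omega>s k i \<le> W" for k i
    proof -
      have each: "\<omega>s k j * inner (\<nu>s k j) (xh - xs k) \<le> \<omega>s k j * (- (\<epsilon>0 / 2))" for j
      proof (cases "\<omega>s k j > 0")
        case True
        then have a: "g (\<tau>s k j) (xs k) = bs k (\<tau>s k j)" "\<nu>s k j \<in> subdiff (g (\<tau>s k j)) (xs k)"
          using actk by auto
        then have "g (\<tau>s k j) xh \<ge> g (\<tau>s k j) (xs k) + inner (\<nu>s k j) (xh - xs k)"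
          unfolding subdiff_def by blast
        moreover have "g (\<tau>s k j) xh \<le> bb (\<tau>s k j) - \<epsilon>0" using xhm \<tau>sT by blast
        moreover have "\<bar>bs k (\<tau>s k j) - bb (\<tau>s k j)\<bar> < \<delta> k" using bsdiff[OF \<tau>sT[of k j]] .
        moreover have "\<delta> k \<le> \<epsilon>0 / 2" by (rule \<delta>le(1))
        ultimately have "inner (\<nu>s k j) (xh - xs k) \<le> - (\<epsilon>0 / 2)" using a(1) by linarith
        then show ?thesis using True by (intro mult_left_mono) auto
      next
        case False
        then have "\<omega>s k j = 0" using \<omega>s0[of k j] by linarith
        then show ?thesis by simp
      qed
      define S where "S = (\<Sum>j\<in>UNIV. \<omega>s k j)"
      have "(\<Sum>j\<in>UNIV. \<omega>s k j * inner (\<nu>s k j) (xh - xs k)) = inner (\<Sum>j\<in>UNIV. \<omega>s k j *\<^sub>R \<nu>s k j) (xh - xs k)"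
        by (simp add: inner_sum_left)
      also have "\<dots> = - inner (us k + cs k) (xh - xs k)" using eqk[of k] by (metis inner_minus_left)
      finally have sumeq: "(\<Sum>j\<in>UNIV. \<omega>s k j * inner (\<nu>s k j) (xh - xs k)) = - inner (us k + cs k) (xh - xs k)" .
      have "(\<Sum>j\<in>UNIV. \<omega>s k j * inner (\<nu>s k j) (xh - xs k)) \<le> (\<Sum>j\<in>UNIV. \<omega>s k j * (- (\<epsilon>0 / 2)))"
        by (rule sum_mono) (rule each)
      also have "\<dots> = - (\<epsilon>0 / 2) * S" unfolding S_def by (simp only: sum_distrib_right[symmetric] mult.commute)
      finally have 1: "(\<epsilon>0 / 2) * S \<le> inner (us k + cs k) (xh - xs k)" using sumeq by linarith
      have 2: "inner (us k + cs k) (xh - xs k) \<le> norm (us k + cs k) * norm (xh - xs k)"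
        by (rule norm_cauchy_schwarz)
      have "norm (cs k) \<le> norm cb + norm (cs k - cb)" using norm_triangle_sub[of "cs k" cb] by simp
      then have "norm (cs k) \<le> norm cb + 1" using csk[of k] \<delta>le1[of k] by linarith
      then have 3: "norm (us k + cs k) \<le> 2 * Mf + norm cb + 1"
        using norm_triangle_ineq[of "us k" "cs k"] usb[of k] by linarith
      have "norm (xh - xs k) \<le> dist xh xb + dist xb (xs k)"
        using dist_triangle[of xh "xs k" xb] by (simp add: dist_norm)
      moreover have "dist xb (xs k) < 1" using xd[of k] \<delta>le1[of k] by (simp add: dist_commute)
      ultimately have 4: "norm (xh - xs k) \<le> dist xh xb + 1" by linarith
      have "norm (us k + cs k) * norm (xh - xs k) \<le> (2 * Mf + norm cb + 1) * (dist xh xb + 1)"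
        using 3 4 order_trans[OF norm_ge_zero 3] by (intro mult_mono) auto
      then have "(\<epsilon>0 / 2) * S \<le> (2 * Mf + norm cb + 1) * (dist xh xb + 1)" using 1 2 by linarith
      then have SW: "S \<le> W" unfolding W_def using \<epsilon>0 by (simp add: pos_le_divide_eq algebra_simps)
      have "\<omega>s k i \<le> S" unfolding S_def by (rule member_le_sum) (auto simp: \<omega>s0)
      then show ?thesis using SW by linarith
    qed

    define K where "K = T \<times> (cball (0::real^'n) (2 * Mg) \<times> {0..W})"
    have cK: "compact K" unfolding K_def by (intro compact_Times T compact_cball compact_Icc)
    define z where "z = (\<lambda>k i. (\<tau>s k i, \<nu>s k i, \<omega>s k i))"
    have zK: "\<forall>k i. z k i \<in> K"
      using \<tau>sT \<nu>sb \<omega>s0 \<omega>sW unfolding K_def z_def by (simp add: mem_cball_0)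
    obtain r1 l where r1: "strict_mono r1" "\<forall>i. l i \<in> K \<and> (\<lambda>k. z (r1 k) i) \<longlonglongrightarrow> l i"
      using fin_subseq[OF cK zK] by blast
    have "\<forall>k. (us \<circ> r1) k \<in> cball 0 (2 * Mf)" using usb by (simp add: mem_cball_0)
    then obtain us0 r2 where r2: "us0 \<in> cball 0 (2 * Mf)" "strict_mono r2" "((us \<circ> r1) \<circ> r2) \<longlonglongrightarrow> us0"
      using seq_compactE[OF compact_imp_seq_compact[OF compact_cball]] by blast
    define r where "r = r1 \<circ> r2"
    have r: "strict_mono r" unfolding r_def using r1(1) r2(2) by (rule strict_mono_o)
    define \<tau>0 where "\<tau>0 = (\<lambda>i. fst (l i))"
    define \<nu>0 where "\<nu>0 = (\<lambda>i. fst (snd (l i)))"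
    define \<omega>0 where "\<omega>0 = (\<lambda>i. snd (snd (l i)))"
    have limz: "(\<lambda>k. z (r k) i) \<longlonglongrightarrow> l i" for i
    proof -
      have "((\<lambda>k. z (r1 k) i) \<circ> r2) \<longlonglongrightarrow> l i" using LIMSEQ_subseq_LIMSEQ[OF _ r2(2)] r1(2) by blast
      then show ?thesis unfolding r_def by (simp add: o_def)
    qed
    have lim\<tau>: "(\<lambda>k. \<tau>s (r k) i) \<longlonglongrightarrow> \<tau>0 i" for i
      using tendsto_fst[OF limz[of i]] unfolding z_def \<tau>0_def by simp
    have lim\<nu>: "(\<lambda>k. \<nu>s (r k) i) \<longlonglongrightarrow> \<nu>0 i" for i
      using tendsto_fst[OF tendsto_snd[OF limz[of i]]] unfolding z_def \<nu>0_def by simp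
    have lim\<omega>: "(\<lambda>k. \<omega>s (r k) i) \<longlonglongrightarrow> \<omega>0 i" for i
      using tendsto_snd[OF tendsto_snd[OF limz[of i]]] unfolding z_def \<omega>0_def by simp
    have \<tau>0T: "\<tau>0 i \<in> T" and \<omega>00: "0 \<le> \<omega>0 i" for i
      using r1(2) unfolding K_def \<tau>0_def \<omega>0_def by (auto simp: mem_Times_iff)
    have limu: "(\<lambda>k. us (r k)) \<longlonglongrightarrow> us0" using r2(3) unfolding r_def by (simp add: o_def)
    have "xs \<longlonglongrightarrow> xb"
      by (rule seq_inverse_tendsto) (use xd \<delta>le(2) in \<open>meson less_le_trans\<close>)
    then have limx: "(\<lambda>k. xs (r k)) \<longlonglongrightarrow> xb" using LIMSEQ_subseq_LIMSEQ[OF _ r] by (simp add: o_def)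
    have "cs \<longlonglongrightarrow> cb"
      by (rule seq_inverse_tendsto) (use csk \<delta>le(2) in \<open>metis dist_norm less_le_trans\<close>)
    then have limc: "(\<lambda>k. cs (r k)) \<longlonglongrightarrow> cb" using LIMSEQ_subseq_LIMSEQ[OF _ r] by (simp add: o_def)

    have us0: "us0 \<in> subdiff f xb"
    proof -
      have "eventually (\<lambda>k. (\<lambda>_. 0::real) k \<in> {0} \<and> us (r k) \<in> subdiff ((\<lambda>_. f) ((\<lambda>_. 0::real) k)) (xs (r k))) sequentially"
        using us by (intro always_eventually allI) simp
      have "(0::real) \<in> {0}" by simp
      from subdiff_limit[OF f_cont_form[OF cvf] tendsto_const this limx limu \<open>eventually _ _\<close>]
      show ?thesis by simp
    qed
    have eq0: "-(us0 + cb) = (\<Sum>i\<in>UNIV. \<omega>0 i *\<^sub>R \<nu>0 i)"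
    proof -
      have A: "(\<lambda>k. -(us (r k) + cs (r k))) \<longlonglongrightarrow> -(us0 + cb)" by (intro tendsto_intros limu limc)
      have B: "(\<lambda>k. (\<Sum>i\<in>UNIV. \<omega>s (r k) i *\<^sub>R \<nu>s (r k) i)) \<longlonglongrightarrow> (\<Sum>i\<in>UNIV. \<omega>0 i *\<^sub>R \<nu>0 i)"
        by (intro tendsto_sum tendsto_scaleR lim\<omega> lim\<nu>)
      have C: "(\<lambda>k. -(us (r k) + cs (r k))) = (\<lambda>k. (\<Sum>i\<in>UNIV. \<omega>s (r k) i *\<^sub>R \<nu>s (r k) i))"
        by (rule ext) (rule eqk)
      have A': "(\<lambda>k. (\<Sum>i\<in>UNIV. \<omega>s (r k) i *\<^sub>R \<nu>s (r k) i)) \<longlonglongrightarrow> -(us0 + cb)" using A unfolding C .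
      show ?thesis by (rule LIMSEQ_unique[OF A' B])
    qed
    have act0: "g (\<tau>0 i) xb = bb (\<tau>0 i) \<and> \<nu>0 i \<in> subdiff (g (\<tau>0 i)) xb" if wp: "\<omega>0 i > 0" for i
    proof -
      have evp: "eventually (\<lambda>k. \<omega>s (r k) i > 0) sequentially" using order_tendstoD(1)[OF lim\<omega>[of i] wp] .
      have evT: "eventually (\<lambda>k. \<tau>s (r k) i \<in> T) sequentially" using \<tau>sT by simp
      have ev2: "eventually (\<lambda>k. \<tau>s (r k) i \<in> T \<and> \<nu>s (r k) i \<in> subdiff (g (\<tau>s (r k) i)) (xs (r k))) sequentially"
        using evp by (rule eventually_mono) (use actk \<tau>sT in blast)
      have sg: "\<nu>0 i \<in> subdiff (g (\<tau>0 i)) xb"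
        by (rule subdiff_limit[OF cont lim\<tau>[of i] \<tau>0T[of i] limx lim\<nu>[of i] ev2])
      have l1: "(\<lambda>k. g (\<tau>s (r k) i) (xs (r k))) \<longlonglongrightarrow> g (\<tau>0 i) xb"
        by (rule g_tendsto[OF cont lim\<tau>[of i] \<tau>0T[of i] evT limx])
      have l2: "(\<lambda>k. bb (\<tau>s (r k) i)) \<longlonglongrightarrow> bb (\<tau>0 i)"
        by (rule continuous_on_tendsto_compose[OF bbcont lim\<tau>[of i] \<tau>0T[of i] evT])
      have l3: "(\<lambda>k. bs (r k) (\<tau>s (r k) i) - bb (\<tau>s (r k) i)) \<longlonglongrightarrow> 0"
      proof (rule seq_inverse_tendsto, rule allI)
        fix k
        have "\<bar>bs (r k) (\<tau>s (r k) i) - bb (\<tau>s (r k) i)\<bar> < \<delta> (r k)" by (rule bsdiff[OF \<tau>sT])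
        also have "\<dots> \<le> inverse (real (Suc (r k)))" by (rule \<delta>le(2))
        also have "\<dots> \<le> inverse (real (Suc k))" using seq_suble[OF r, of k] by (simp add: le_imp_inverse_le)
        finally show "dist (bs (r k) (\<tau>s (r k) i) - bb (\<tau>s (r k) i)) 0 < inverse (real (Suc k))" by simp
      qed
      have "(\<lambda>k. bb (\<tau>s (r k) i) + (bs (r k) (\<tau>s (r k) i) - bb (\<tau>s (r k) i))) \<longlonglongrightarrow> bb (\<tau>0 i) + 0"
        by (intro tendsto_add l2 l3)
      then have l4: "(\<lambda>k. bs (r k) (\<tau>s (r k) i)) \<longlonglongrightarrow> bb (\<tau>0 i)" by simp
      have "eventually (\<lambda>k. bs (r k) (\<tau>s (r k) i) = g (\<tau>s (r k) i) (xs (r k))) sequentially"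
        using evp by (rule eventually_mono) (use actk in force)
      from Lim_transform_eventually[OF l4 this] have "(\<lambda>k. g (\<tau>s (r k) i) (xs (r k))) \<longlonglongrightarrow> bb (\<tau>0 i)" .
      then have "g (\<tau>0 i) xb = bb (\<tau>0 i)" using LIMSEQ_unique[OF l1] by blast
      then show ?thesis using sg by blast
    qed

    have w0pos: "\<forall>i. \<omega>0 i > 0"
    proof (rule enc_family[OF enc us0 _ _ eq0])
      show "\<forall>i. 0 \<le> \<omega>0 i" using \<omega>00 by blast
      show "\<forall>i. 0 < \<omega>0 i \<longrightarrow> \<tau>0 i \<in> T \<and> g (\<tau>0 i) xb = bb (\<tau>0 i) \<and> \<nu>0 i \<in> subdiff (g (\<tau>0 i)) xb"
        using act0 \<tau>0T by blast
    qed
    have act0': "\<forall>i. \<tau>0 i \<in> T \<and> g (\<tau>0 i) xb = bb (\<tau>0 i) \<and> \<nu>0 i \<in> subdiff (g (\<tau>0 i)) xb"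
      using act0 \<tau>0T w0pos by blast
    define Lf where "Lf = (\<lambda>\<alpha>::real^'n. \<Sum>i\<in>UNIV. (\<alpha> $ i) *\<^sub>R \<nu>0 i)"
    have linL: "linear Lf"
      by (rule linearI) (simp_all add: Lf_def scaleR_add_left sum.distrib scaleR_sum_right)
    have injL: "\<forall>\<alpha>\<in>UNIV. Lf \<alpha> = 0 \<longrightarrow> \<alpha> = 0"
    proof (intro ballI impI)
      fix \<alpha> :: "real^'n" assume "Lf \<alpha> = 0"
      then have "(\<Sum>i\<in>UNIV. (\<lambda>i. \<alpha> $ i) i *\<^sub>R \<nu>0 i) = 0" unfolding Lf_def by simp
      from enc_indep[OF enc us0 w0pos act0' eq0 this] show "\<alpha> = 0" by (simp add: vec_eq_iff)
    qed
    have blL: "bounded_linear Lf" using linL linear_conv_bounded_linear by blast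
    obtain e where e: "e > 0" "\<forall>\<alpha>\<in>UNIV. e * norm \<alpha> \<le> norm (Lf \<alpha>)"
      using injective_imp_isometric[OF closed_UNIV subspace_UNIV blL injL] by blast
    have E1: "(\<lambda>k. \<Sum>i\<in>UNIV. norm (\<nu>s (r k) i - \<nu>0 i)) \<longlonglongrightarrow> 0"
    proof -
      have "(\<lambda>k. \<Sum>i\<in>UNIV. norm (\<nu>s (r k) i - \<nu>0 i)) \<longlonglongrightarrow> (\<Sum>i\<in>(UNIV::'n set). 0)"
        by (intro tendsto_sum tendsto_norm_zero LIM_zero lim\<nu>)
      then show ?thesis by simp
    qed
    have ev1: "eventually (\<lambda>k. (\<Sum>i\<in>UNIV. norm (\<nu>s (r k) i - \<nu>0 i)) < e / 2) sequentially"
      by (rule order_tendstoD(2)[OF E1]) (use e(1) in simp)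
    have ev2: "eventually (\<lambda>k. \<forall>i. \<omega>s (r k) i > \<omega>0 i / 2) sequentially"
    proof (rule eventually_all_finite)
      fix i
      show "eventually (\<lambda>k. \<omega>s (r k) i > \<omega>0 i / 2) sequentially"
        by (rule order_tendstoD(1)[OF lim\<omega>[of i]]) (use w0pos[rule_format, of i] in linarith)
    qed
    have E3: "(\<lambda>k. (2 / e) * norm (cs (r k) - cb)) \<longlonglongrightarrow> 0"
    proof -
      have "(\<lambda>k. (2 / e) * norm (cs (r k) - cb)) \<longlonglongrightarrow> (2 / e) * 0"
        by (intro tendsto_mult tendsto_const tendsto_norm_zero LIM_zero limc)
      then show ?thesis by simp
    qed
    have ev3: "eventually (\<lambda>k. \<forall>i. (2 / e) * norm (cs (r k) - cb) < \<omega>0 i / 2) sequentially"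
    proof (rule eventually_all_finite)
      fix i
      show "eventually (\<lambda>k. (2 / e) * norm (cs (r k) - cb) < \<omega>0 i / 2) sequentially"
        by (rule order_tendstoD(2)[OF E3]) (use w0pos in simp)
    qed
    obtain N where N: "(\<Sum>i\<in>UNIV. norm (\<nu>s (r N) i - \<nu>0 i)) < e / 2" "\<forall>i. \<omega>s (r N) i > \<omega>0 i / 2"
      "\<forall>i. (2 / e) * norm (cs (r N) - cb) < \<omega>0 i / 2"
      using eventually_happens'[OF sequentially_bot eventually_conj[OF ev1 eventually_conj[OF ev2 ev3]]] by blast
    define Kn where "Kn = r N"
    define Lk where "Lk = (\<lambda>\<alpha>::real^'n. \<Sum>i\<in>UNIV. (\<alpha> $ i) *\<^sub>R \<nu>s Kn i)"
    have linLk: "linear Lk"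
      by (rule linearI) (simp_all add: Lk_def scaleR_add_left sum.distrib scaleR_sum_right)
    have bdk: "(e / 2) * norm \<alpha> \<le> norm (Lk \<alpha>)" for \<alpha>
    proof -
      have "Lk \<alpha> - Lf \<alpha> = (\<Sum>i\<in>UNIV. (\<alpha> $ i) *\<^sub>R (\<nu>s Kn i - \<nu>0 i))"
        unfolding Lk_def Lf_def by (simp add: sum_subtractf scaleR_diff_right)
      then have "norm (Lk \<alpha> - Lf \<alpha>) \<le> (\<Sum>i\<in>UNIV. norm ((\<alpha> $ i) *\<^sub>R (\<nu>s Kn i - \<nu>0 i)))"
        using norm_sum by metis
      also have "\<dots> = (\<Sum>i\<in>UNIV. \<bar>\<alpha> $ i\<bar> * norm (\<nu>s Kn i - \<nu>0 i))" by simp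
      also have "\<dots> \<le> (\<Sum>i\<in>UNIV. norm \<alpha> * norm (\<nu>s Kn i - \<nu>0 i))"
        by (intro sum_mono mult_right_mono component_le_norm_cart norm_ge_zero)
      also have "\<dots> = norm \<alpha> * (\<Sum>i\<in>UNIV. norm (\<nu>s Kn i - \<nu>0 i))" by (simp add: sum_distrib_left)
      also have "\<dots> \<le> norm \<alpha> * (e / 2)" using N(1) unfolding Kn_def by (intro mult_left_mono) auto
      finally have 1: "norm (Lk \<alpha> - Lf \<alpha>) \<le> norm \<alpha> * (e / 2)" .
      have 2: "norm (Lf \<alpha>) \<le> norm (Lk \<alpha>) + norm (Lf \<alpha> - Lk \<alpha>)" by (rule norm_triangle_sub)
      have 3: "norm (Lf \<alpha> - Lk \<alpha>) = norm (Lk \<alpha> - Lf \<alpha>)" by (rule norm_minus_commute)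
      have 4: "e * norm \<alpha> \<le> norm (Lf \<alpha>)" using e(2) by blast
      show ?thesis using 1 2 3 4 by (simp add: algebra_simps)
    qed
    have injk: "inj Lk"
    proof (rule injI)
      fix a b assume "Lk a = Lk b"
      then have "Lk (a - b) = 0" using linear_diff[OF linLk] by simp
      then have "(e / 2) * norm (a - b) \<le> 0" using bdk[of "a - b"] by simp
      then have "norm (a - b) \<le> 0" using e(1) by (simp add: mult_le_0_iff)
      then show "a = b" by simp
    qed
    have "surj Lk" by (rule linear_injective_imp_surjective[OF linLk injk refl])
    then obtain \<mu> where \<mu>: "cs Kn - cb = Lk \<mu>" by (metis surjD)
    have "(e / 2) * norm \<mu> \<le> norm (cs Kn - cb)" using bdk[of \<mu>] \<mu> by simp
    then have n\<mu>: "norm \<mu> \<le> (2 / e) * norm (cs Kn - cb)" using e(1) by (simp add: field_simps)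
    define \<omega>' where "\<omega>' = (\<lambda>i. \<omega>s Kn i + \<mu> $ i)"
    have w'pos: "\<omega>' i > 0" and wKpos: "\<omega>s Kn i > 0" for i
    proof -
      have "\<bar>\<mu> $ i\<bar> \<le> norm \<mu>" by (rule component_le_norm_cart)
      moreover have "(2 / e) * norm (cs Kn - cb) < \<omega>0 i / 2" using N(3) unfolding Kn_def by blast
      moreover have "\<omega>s Kn i > \<omega>0 i / 2" using N(2) unfolding Kn_def by blast
      moreover have "\<omega>0 i > 0" using w0pos by blast
      ultimately show "\<omega>' i > 0" "\<omega>s Kn i > 0" unfolding \<omega>'_def using n\<mu> by linarith+
    qed
    have "(\<Sum>i\<in>UNIV. \<omega>' i *\<^sub>R \<nu>s Kn i) = (\<Sum>i\<in>UNIV. \<omega>s Kn i *\<^sub>R \<nu>s Kn i) + Lk \<mu>"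
      unfolding \<omega>'_def Lk_def by (simp add: scaleR_add_left sum.distrib)
    also have "\<dots> = -(us Kn + cs Kn) + (cs Kn - cb)" using eqk[of Kn] \<mu> by simp
    also have "\<dots> = -(us Kn + cb)" by (simp add: algebra_simps)
    finally have eq': "-(us Kn + cb) = (\<Sum>i\<in>UNIV. \<omega>' i *\<^sub>R \<nu>s Kn i)" by simp
    have "xs Kn \<in> optset T f g cb (bs Kn)"
    proof (rule suff_opt[OF _ us[of Kn] finite_class.finite_UNIV _ _ eq'])
      show "xs Kn \<in> feas T g (bs Kn)" using xopt[of Kn] unfolding optset_def by blast
      show "\<forall>i\<in>UNIV. 0 \<le> \<omega>' i" using w'pos less_imp_le by blast
      show "\<forall>i\<in>UNIV. 0 < \<omega>' i \<longrightarrow> \<tau>s Kn i \<in> T \<and> g (\<tau>s Kn i) (xs Kn) = bs Kn (\<tau>s Kn i) \<and> \<nu>s Kn i \<in> subdiff (g (\<tau>s Kn i)) (xs Kn)"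
        using actk[OF wKpos] \<tau>sT by blast
    qed
    then show False using xnopt by blast
  qed
qed



lemma clm_quot_mono: "0 \<le> s \<Longrightarrow> s \<le> p \<Longrightarrow> 0 \<le> d \<Longrightarrow> 0 < q \<Longrightarrow> clm_quot q s d \<le> clm_quot q p d"
  unfolding clm_quot_def by (auto intro!: divide_right_mono powr_mono2)

theorem theorem4p10:
  fixes T :: "'z::metric_space set"
    and f :: "real^'n \<Rightarrow> real"
    and g :: "'z \<Rightarrow> real^'n \<Rightarrow> real"
    and q :: real and cb :: "real^'n" and bb :: "'z \<Rightarrow> real" and xb :: "real^'n"
  assumes "compact T" and "T \<noteq> UNIV"
    and "convex_on UNIV f"
    and "\<forall>t\<in>T. convex_on UNIV (g t)"
    and "continuous_on (T \<times> UNIV) (\<lambda>(t, x). g t x)"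
    and "0 < q" and "q \<le> 1"
    and "bb \<in> CT T"
    and "xb \<in> optset T f g cb bb"
    and "ENC T f g cb bb xb"
  shows "clm q (UNIV \<times> CT T) (pdist T) (\<lambda>(c, b). optset T f g c b) (cb, bb) xb
       = clm q (CT T) (\<lambda>b b'. supnorm T (\<lambda>t. b t - b' t)) (\<lambda>b. optset T f g cb b) bb xb"
proof -
  note T = assms(1) and q = assms(6)
  have bbcont: "continuous_on T bb" using assms(8) unfolding CT_def by simp
  obtain \<delta>0 where \<delta>0: "\<delta>0 > 0" "\<forall>c b x. norm (c - cb) < \<delta>0 \<longrightarrow> b \<in> CT T \<longrightarrow> supnorm T (\<lambda>t. b t - bb t) < \<delta>0
            \<longrightarrow> x \<in> optset T f g c b \<longrightarrow> dist x xb < \<delta>0 \<longrightarrow> x \<in> optset T f g cb b"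
    using key[OF assms(1,3,4,5,8,9,10)] by blast
  have snn: "0 \<le> supnorm T (\<lambda>t. b t - bb t)" if "b \<in> CT T" for b
    using that bbcont by (intro supnorm_nonneg[OF T]) (auto simp: CT_def intro!: continuous_intros)
  define SF where "SF = (\<lambda>\<delta>. {(y, x). y \<in> UNIV \<times> CT T \<and> x \<in> (\<lambda>(c, b). optset T f g c b) y
      \<and> pdist T y (cb, bb) < \<delta> \<and> dist x xb < \<delta>})"
  define SP where "SP = (\<lambda>\<delta>. {(y, x). y \<in> CT T \<and> x \<in> optset T f g cb y
      \<and> supnorm T (\<lambda>t. y t - bb t) < \<delta> \<and> dist x xb < \<delta>})"
  define QF where "QF = (\<lambda>yx. clm_quot q (pdist T (fst yx) (cb, bb)) (infdist (snd yx) (optset T f g cb bb)))"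
  define QP where "QP = (\<lambda>yx. clm_quot q (supnorm T (\<lambda>t. fst yx t - bb t)) (infdist (snd yx) (optset T f g cb bb)))"
  have L: "clm q (UNIV \<times> CT T) (pdist T) (\<lambda>(c, b). optset T f g c b) (cb, bb) xb = (SUP \<delta>\<in>{0<..}. INF yx\<in>SF \<delta>. QF yx)"
    unfolding clm_def SF_def QF_def by simp
  have R: "clm q (CT T) (\<lambda>b b'. supnorm T (\<lambda>t. b t - b' t)) (\<lambda>b. optset T f g cb b) bb xb = (SUP \<delta>\<in>{0<..}. INF yx\<in>SP \<delta>. QP yx)"
    unfolding clm_def SP_def QP_def by simp
  have le1: "(INF yx\<in>SF \<delta>. QF yx) \<le> (INF yx\<in>SP \<delta>. QP yx)" for \<delta>
  proof (rule INF_mono)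
    fix m assume m: "m \<in> SP \<delta>"
    obtain b x where bx: "m = (b, x)" by fastforce
    have b: "b \<in> CT T" "x \<in> optset T f g cb b" "supnorm T (\<lambda>t. b t - bb t) < \<delta>" "dist x xb < \<delta>"
      using m unfolding SP_def bx by auto
    have pd: "pdist T (cb, b) (cb, bb) = supnorm T (\<lambda>t. b t - bb t)"
      unfolding pdist_def using snn[OF b(1)] by simp
    have "((cb, b), x) \<in> SF \<delta>" unfolding SF_def using b pd by simp
    moreover have "QF ((cb, b), x) \<le> QP m" unfolding QF_def QP_def bx using pd by simp
    ultimately show "\<exists>n\<in>SF \<delta>. QF n \<le> QP m" by blast
  qed
  have le2: "(INF yx\<in>SP \<delta>. QP yx) \<le> (INF yx\<in>SF (min \<delta> \<delta>0). QF yx)" for \<delta>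
  proof (rule INF_mono)
    fix m assume m: "m \<in> SF (min \<delta> \<delta>0)"
    obtain c b x where cbx: "m = ((c, b), x)" by (metis prod.collapse)
    have h: "b \<in> CT T" "x \<in> optset T f g c b" "pdist T (c, b) (cb, bb) < min \<delta> \<delta>0" "dist x xb < min \<delta> \<delta>0"
      using m unfolding SF_def cbx by auto
    have pd: "pdist T (c, b) (cb, bb) = max (norm (c - cb)) (supnorm T (\<lambda>t. b t - bb t))"
      unfolding pdist_def by simp
    have xo: "x \<in> optset T f g cb b" using \<delta>0(2) h pd by auto
    have "(b, x) \<in> SP \<delta>" unfolding SP_def using h pd xo by auto
    moreover have "QP (b, x) \<le> QF m"
      unfolding QF_def QP_def cbx using pd snn[OF h(1)] q
      by (simp add: clm_quot_mono infdist_nonneg)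
    ultimately show "\<exists>n\<in>SP \<delta>. QP n \<le> QF m" by blast
  qed
  have "(SUP \<delta>\<in>{0<..}. INF yx\<in>SF \<delta>. QF yx) \<le> (SUP \<delta>\<in>{0<..}. INF yx\<in>SP \<delta>. QP yx)"
    by (rule SUP_mono) (use le1 in blast)
  moreover have "(SUP \<delta>\<in>{0<..}. INF yx\<in>SP \<delta>. QP yx) \<le> (SUP \<delta>\<in>{0<..}. INF yx\<in>SF \<delta>. QF yx)"
  proof (rule SUP_mono)
    fix \<delta> :: real assume "\<delta> \<in> {0<..}"
    then have "min \<delta> \<delta>0 \<in> {0<..}" using \<delta>0(1) by simp
    then show "\<exists>m\<in>{0<..}. (INF yx\<in>SP \<delta>. QP yx) \<le> (INF yx\<in>SF m. QF yx)" using le2 by blast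
  qed
  ultimately show ?thesis unfolding L R by (rule antisym)
qed


end
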